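(* Let $\mathbb{X}=\{p_1,\dots,p_n\}\subseteq\mathbb{P}^{k-1}$ with $n\ge2$, let $L\in P_1$ vanish at no point of $\mathbb{X}$, for each $i$ let $v_i=(p_{i1},\dots,p_{ik})\in\mathbb{F}_q^k$ be the coordinate vector of $p_i$ with $L(v_i)=1$, and let $\widehat{\mathfrak{J}}_{\mathbb{X}}\subseteq P$ be the preimage of the canonical ideal $\mathfrak{J}_{R/\mathbb{F}_q[\ell]}$. Then: (a) $(\widehat{\mathfrak{J}}_{\mathbb{X}})_{2r_{\mathbb{X}}-1}=\{g\in P_{2r_{\mathbb{X}}-1}: g(v_1)+\cdots+g(v_n)=0\}$; (b) the element $\Phi_{\mathbb{X}}=\sum_{\alpha\in\mathbb{N}^k,\,|\alpha|=2r_{\mathbb{X}}-1}\Big(\sum_{i=1}^np_{i1}^{\alpha_1}\cdots p_{ik}^{\alpha_k}\Big)\pi^{[\alpha]}\in\mathcal{D}_{-(2r_{\mathbb{X}}-1)}$ (i.e. the functional $g\mapsto\sum_ig(v_i)$ on $P_{2r_{\mathbb{X}}-1}$) is nonzero and generates the Macaulay inverse system of $\widehat{\mathfrak{J}}_{\mathbb{X}}$: $(\widehat{\mathfrak{J}}_{\mathbb{X}})^\perp=P\circ\Phi_{\mathbb{X}}$.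
   Context: $P=\mathbb{F}_q[x_1,\dots,x_k]$ standard graded; $\mathbb{X}$ a set of $n$ distinct $\mathbb{F}_q$-rational points of $\mathbb{P}^{k-1}$, $I_{\mathbb{X}}$ its vanishing ideal, $R=P/I_{\mathbb{X}}$, $r_{\mathbb{X}}=\min\{i\ge0:\dim R_i=n\}$; $\ell$ the class of $L$ in $R$. With $f(p_j)=f(v_j)$, the separators are the unique $f_1,\dots,f_n\in R_{r_{\mathbb{X}}}$ with $f_i(p_j)=\delta_{ij}$, and the canonical ideal is $\mathfrak{J}_{R/\mathbb{F}_q[\ell]}=\{\sum_i\varphi(f_i)f_i:\varphi\in\mathrm{Hom}_{\mathbb{F}_q[\ell]}(R,\mathbb{F}_q[\ell])\}\subseteq R$. $\mathcal{D}=\bigoplus_{j\ge0}\mathrm{Hom}_{\mathbb{F}_q}(P_j,\mathbb{F}_q)$ with $\mathcal{D}_{-j}=\mathrm{Hom}(P_j,\mathbb{F}_q)$ and basis $\pi^{[\beta]}$ dual to the monomials, $\pi^{[\beta]}(x^\alpha)=\delta_{\alpha\beta}$. $P$ acts by contraction: for $f\in P_d$, $\psi\in\mathcal{D}_{-j}$, $(f\circ\psi)(g)=\psi(fg)$ for $g\in P_{j-d}$. For a homogeneous ideal $J$, $J^\perp=\{\psi\in\mathcal{D}:f\circ\psi=0\ \forall f\in J\}$, and $P\circ\Phi$ is the submodule generated by $\Phi$. *)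

theory Defs
  imports "HOL-Library.Poly_Mapping"
begin

text \<open>The ring P = F_q[x_1..x_k]
  is the set of those polynomials involving only the variables with index < k.\<close>

type_synonym 'a mpoly = "(nat \<Rightarrow>\<^sub>0 nat) \<Rightarrow>\<^sub>0 'a"

definition mdeg :: "(nat \<Rightarrow>\<^sub>0 nat) \<Rightarrow> nat" where
  "mdeg \<alpha> = (\<Sum>i\<in>Poly_Mapping.keys \<alpha>. Poly_Mapping.lookup \<alpha> i)"

definition Pk :: "nat \<Rightarrow> ('a::zero) mpoly set" where
  "Pk k = {f. \<forall>\<alpha>\<in>Poly_Mapping.keys f. Poly_Mapping.keys \<alpha> \<subseteq> {..<k}}"

definition homog :: "nat \<Rightarrow> ('a::zero) mpoly \<Rightarrow> bool" where
  "homog d f \<longleftrightarrow> (\<forall>\<alpha>\<in>Poly_Mapping.keys f. mdeg \<alpha> = d)"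

definition Pd :: "nat \<Rightarrow> nat \<Rightarrow> ('a::zero) mpoly set" where
  "Pd k d = {f \<in> Pk k. homog d f}"

definition hcomp :: "nat \<Rightarrow> ('a::zero) mpoly \<Rightarrow> 'a mpoly" where
  "hcomp d f = Abs_poly_mapping (\<lambda>\<alpha>. if mdeg \<alpha> = d then Poly_Mapping.lookup f \<alpha> else 0)"

definition monom_eval :: "(nat \<Rightarrow> 'a::comm_semiring_1) \<Rightarrow> (nat \<Rightarrow>\<^sub>0 nat) \<Rightarrow> 'a" where
  "monom_eval v \<alpha> = (\<Prod>i\<in>Poly_Mapping.keys \<alpha>. v i ^ Poly_Mapping.lookup \<alpha> i)"

definition eval :: "(nat \<Rightarrow> 'a::comm_semiring_1) \<Rightarrow> 'a mpoly \<Rightarrow> 'a" where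
  "eval v f = (\<Sum>\<alpha>\<in>Poly_Mapping.keys f. Poly_Mapping.lookup f \<alpha> * monom_eval v \<alpha>)"

definition const :: "'a::zero \<Rightarrow> 'a mpoly" where
  "const c = Poly_Mapping.single 0 c"

text \<open>The points p_0..p_(n-1) are given by coordinate vectors v i (i < n), coordinates
  v i 0 .. v i (k-1).\<close>
definition vanish_ideal :: "nat \<Rightarrow> nat \<Rightarrow> (nat \<Rightarrow> nat \<Rightarrow> 'a::comm_ring_1) \<Rightarrow> 'a mpoly set" where
  "vanish_ideal k n v = {f \<in> Pk k. \<forall>d. \<forall>i<n. eval (v i) (hcomp d f) = 0}"

text \<open>R_d = P_d / (I_X)_d as a quotient set; over the finite field F_q, dim R_d = n iff
  |R_d| = q^n.\<close>
definition Rdeg :: "nat \<Rightarrow> nat \<Rightarrow> (nat \<Rightarrow> nat \<Rightarrow> 'a::comm_ring_1) \<Rightarrow> nat \<Rightarrow> 'a mpoly set set" where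
  "Rdeg k n v d = Pd k d // {(f, g). f \<in> Pd k d \<and> g \<in> Pd k d \<and> f - g \<in> vanish_ideal k n v}"

definition reg_index :: "nat \<Rightarrow> nat \<Rightarrow> (nat \<Rightarrow> nat \<Rightarrow> 'a::{comm_ring_1,finite}) \<Rightarrow> nat" where
  "reg_index k n v = (LEAST i. card (Rdeg k n v i) = card (UNIV :: 'a set) ^ n)"

definition separator :: "nat \<Rightarrow> nat \<Rightarrow> (nat \<Rightarrow> nat \<Rightarrow> 'a::{comm_ring_1,finite}) \<Rightarrow> nat \<Rightarrow> 'a mpoly" where
  "separator k n v i = (SOME F. F \<in> Pd k (reg_index k n v) \<and>
      (\<forall>j<n. eval (v j) F = (if j = i then 1 else 0)))"

text \<open>Representatives in P of the elements of the subalgebra F_q[l] of R generated by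
  the class l of L.\<close>
definition FL :: "nat \<Rightarrow> nat \<Rightarrow> (nat \<Rightarrow> nat \<Rightarrow> 'a::comm_ring_1) \<Rightarrow> 'a mpoly \<Rightarrow> 'a mpoly set" where
  "FL k n v L = {f \<in> Pk k. \<exists>m c. f - (\<Sum>j\<le>m. const (c j) * L ^ j) \<in> vanish_ideal k n v}"

text \<open>Lifts to P of F_q[l]-linear maps R -> F_q[l]: a map on representatives, well defined
  modulo I_X, with values in F_q[l], additive and F_q[l]-linear modulo I_X.\<close>
definition is_FL_hom :: "nat \<Rightarrow> nat \<Rightarrow> (nat \<Rightarrow> nat \<Rightarrow> 'a::comm_ring_1) \<Rightarrow> 'a mpoly
    \<Rightarrow> ('a mpoly \<Rightarrow> 'a mpoly) \<Rightarrow> bool" where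
  "is_FL_hom k n v L \<phi> \<longleftrightarrow>
     (\<forall>f\<in>Pk k. \<phi> f \<in> FL k n v L) \<and>
     (\<forall>f\<in>Pk k. \<forall>g\<in>Pk k. f - g \<in> vanish_ideal k n v \<longrightarrow> \<phi> f - \<phi> g \<in> vanish_ideal k n v) \<and>
     (\<forall>f\<in>Pk k. \<forall>g\<in>Pk k. \<phi> (f + g) - (\<phi> f + \<phi> g) \<in> vanish_ideal k n v) \<and>
     (\<forall>a\<in>FL k n v L. \<forall>f\<in>Pk k. \<phi> (a * f) - a * \<phi> f \<in> vanish_ideal k n v)"

text \<open>The preimage in P of the canonical ideal J_(R/F_q[l]) = { sum_i phi(f_i) f_i }.\<close>
definition canon_hat :: "nat \<Rightarrow> nat \<Rightarrow> (nat \<Rightarrow> nat \<Rightarrow> 'a::{comm_ring_1,finite}) \<Rightarrow> 'a mpoly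
    \<Rightarrow> 'a mpoly set" where
  "canon_hat k n v L = {g \<in> Pk k. \<exists>\<phi>. is_FL_hom k n v L \<phi> \<and>
      g - (\<Sum>i<n. \<phi> (separator k n v i) * separator k n v i) \<in> vanish_ideal k n v}"

text \<open>The divided-power module D: an element sum_beta c_beta pi^[beta] is represented by
  its finitely supported coefficient function beta |-> c_beta (monomials in x_0..x_(k-1)).\<close>
definition Dmod :: "nat \<Rightarrow> ((nat \<Rightarrow>\<^sub>0 nat) \<Rightarrow> 'a::zero) set" where
  "Dmod k = {\<psi>. finite {\<beta>. \<psi> \<beta> \<noteq> 0} \<and> (\<forall>\<beta>. \<psi> \<beta> \<noteq> 0 \<longrightarrow> Poly_Mapping.keys \<beta> \<subseteq> {..<k})}"

text \<open>Contraction f o psi:  (f o psi)(x^gamma) = psi(f x^gamma) (bilinear extension).\<close>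
definition contract :: "'a::comm_semiring_1 mpoly \<Rightarrow> ((nat \<Rightarrow>\<^sub>0 nat) \<Rightarrow> 'a)
    \<Rightarrow> ((nat \<Rightarrow>\<^sub>0 nat) \<Rightarrow> 'a)" where
  "contract f \<psi> = (\<lambda>\<gamma>. \<Sum>\<alpha>\<in>Poly_Mapping.keys f. Poly_Mapping.lookup f \<alpha> * \<psi> (\<alpha> + \<gamma>))"

definition perp :: "nat \<Rightarrow> 'a::comm_semiring_1 mpoly set \<Rightarrow> ((nat \<Rightarrow>\<^sub>0 nat) \<Rightarrow> 'a) set" where
  "perp k J = {\<psi> \<in> Dmod k. \<forall>f\<in>J. contract f \<psi> = (\<lambda>_. 0)}"

definition PhiX :: "nat \<Rightarrow> nat \<Rightarrow> (nat \<Rightarrow> nat \<Rightarrow> 'a::{comm_ring_1,finite})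
    \<Rightarrow> ((nat \<Rightarrow>\<^sub>0 nat) \<Rightarrow> 'a)" where
  "PhiX k n v = (\<lambda>\<alpha>. if Poly_Mapping.keys \<alpha> \<subseteq> {..<k} \<and> mdeg \<alpha> = 2 * reg_index k n v - 1
       then (\<Sum>i<n. \<Prod>j<k. v i j ^ Poly_Mapping.lookup \<alpha> j) else 0)"

end

theory Submission
  imports Defs "HOL-Library.FuncSet"
begin

lemma lookup_zero_notin: "\<alpha> \<notin> Poly_Mapping.keys f \<Longrightarrow> Poly_Mapping.lookup f \<alpha> = 0"
  by (simp add: in_keys_iff)

lemma poly_expand:
  assumes "finite S" "Poly_Mapping.keys f \<subseteq> S"
  shows "f = (\<Sum>\<alpha>\<in>S. Poly_Mapping.single \<alpha> (Poly_Mapping.lookup f \<alpha>))"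
proof (rule poly_mapping_eqI)
  fix \<beta>
  have "Poly_Mapping.lookup (\<Sum>\<alpha>\<in>S. Poly_Mapping.single \<alpha> (Poly_Mapping.lookup f \<alpha>)) \<beta>
     = (\<Sum>\<alpha>\<in>S. (Poly_Mapping.lookup f \<alpha> when \<alpha> = \<beta>))"
    by (simp add: lookup_sum lookup_single)
  also have "\<dots> = (if \<beta> \<in> S then Poly_Mapping.lookup f \<beta> else 0)"
    using assms(1) by (simp add: when_def sum.delta)
  also have "\<dots> = Poly_Mapping.lookup f \<beta>"
    using assms(2) by (auto simp: in_keys_iff)
  finally show "Poly_Mapping.lookup f \<beta> = Poly_Mapping.lookup (\<Sum>\<alpha>\<in>S. Poly_Mapping.single \<alpha> (Poly_Mapping.lookup f \<alpha>)) \<beta>"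
    by simp
qed

lemma keys_add_nat: "Poly_Mapping.keys (\<alpha> + \<beta> :: nat \<Rightarrow>\<^sub>0 nat) = Poly_Mapping.keys \<alpha> \<union> Poly_Mapping.keys \<beta>"
  by (auto simp: in_keys_iff lookup_add)

lemma mev_superset:
  assumes "finite S" "Poly_Mapping.keys \<alpha> \<subseteq> S"
  shows "monom_eval v \<alpha> = (\<Prod>i\<in>S. v i ^ Poly_Mapping.lookup \<alpha> i)"
  unfolding monom_eval_def
  by (rule prod.mono_neutral_left) (use assms in \<open>auto simp: in_keys_iff\<close>)

lemma mdeg_superset:
  assumes "finite S" "Poly_Mapping.keys \<alpha> \<subseteq> S"
  shows "mdeg \<alpha> = (\<Sum>i\<in>S. Poly_Mapping.lookup \<alpha> i)"
  unfolding mdeg_def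
  by (rule sum.mono_neutral_left) (use assms in \<open>auto simp: in_keys_iff\<close>)

lemma mev_add: "monom_eval v (\<alpha> + \<beta>) = monom_eval v \<alpha> * monom_eval v \<beta>"
proof -
  let ?S = "Poly_Mapping.keys \<alpha> \<union> Poly_Mapping.keys \<beta>"
  have "monom_eval v (\<alpha> + \<beta>) = (\<Prod>i\<in>?S. v i ^ Poly_Mapping.lookup (\<alpha>+\<beta>) i)"
    by (rule mev_superset) (auto simp: keys_add_nat)
  also have "\<dots> = (\<Prod>i\<in>?S. v i ^ Poly_Mapping.lookup \<alpha> i) * (\<Prod>i\<in>?S. v i ^ Poly_Mapping.lookup \<beta> i)"
    by (simp add: lookup_add power_add prod.distrib)
  also have "\<dots> = monom_eval v \<alpha> * monom_eval v \<beta>"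
    by (simp add: mev_superset[symmetric])
  finally show ?thesis .
qed

lemma mdeg_add: "mdeg (\<alpha> + \<beta>) = mdeg \<alpha> + mdeg \<beta>"
proof -
  let ?S = "Poly_Mapping.keys \<alpha> \<union> Poly_Mapping.keys \<beta>"
  have "mdeg (\<alpha> + \<beta>) = (\<Sum>i\<in>?S. Poly_Mapping.lookup (\<alpha>+\<beta>) i)"
    by (rule mdeg_superset) (auto simp: keys_add_nat)
  also have "\<dots> = (\<Sum>i\<in>?S. Poly_Mapping.lookup \<alpha> i) + (\<Sum>i\<in>?S. Poly_Mapping.lookup \<beta> i)"
    by (simp add: lookup_add sum.distrib)
  also have "\<dots> = mdeg \<alpha> + mdeg \<beta>"
    by (simp add: mdeg_superset[symmetric])
  finally show ?thesis .
qed

lemma mev_zero [simp]: "monom_eval v 0 = 1"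
  by (simp add: monom_eval_def)

lemma mdeg_zero [simp]: "mdeg 0 = 0"
  by (simp add: mdeg_def)

lemma lookup_le_mdeg: "Poly_Mapping.lookup \<alpha> i \<le> mdeg \<alpha>"
proof (cases "i \<in> Poly_Mapping.keys \<alpha>")
  case True
  then show ?thesis unfolding mdeg_def
    by (intro member_le_sum) auto
qed (simp add: in_keys_iff)

lemma mdeg_eq_0: "mdeg \<alpha> = 0 \<Longrightarrow> \<alpha> = 0"
  by (metis le_zero_eq lookup_le_mdeg lookup_zero poly_mapping_eqI)

lemma eval_superset:
  assumes "finite S" "Poly_Mapping.keys f \<subseteq> S"
  shows "eval v f = (\<Sum>\<alpha>\<in>S. Poly_Mapping.lookup f \<alpha> * monom_eval v \<alpha>)"
  unfolding eval_def
  by (rule sum.mono_neutral_left) (use assms in \<open>auto simp: in_keys_iff\<close>)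

lemma eval_add: "eval v (f + g) = eval v f + eval v g"
proof -
  let ?S = "Poly_Mapping.keys f \<union> Poly_Mapping.keys g"
  have "eval v (f+g) = (\<Sum>\<alpha>\<in>?S. Poly_Mapping.lookup (f+g) \<alpha> * monom_eval v \<alpha>)"
    by (rule eval_superset) (auto simp: in_keys_iff lookup_add)
  also have "\<dots> = (\<Sum>\<alpha>\<in>?S. Poly_Mapping.lookup f \<alpha> * monom_eval v \<alpha>) + (\<Sum>\<alpha>\<in>?S. Poly_Mapping.lookup g \<alpha> * monom_eval v \<alpha>)"
    by (simp add: lookup_add distrib_right sum.distrib)
  also have "\<dots> = eval v f + eval v g"
    by (simp add: eval_superset[symmetric])
  finally show ?thesis .
qed

lemma eval_zero [simp]: "eval v 0 = 0"
  by (simp add: eval_def)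

lemma eval_uminus: "eval v (- f) = - eval v (f :: 'a::comm_ring_1 mpoly)"
  by (simp add: eval_def sum_negf)

lemma eval_diff: "eval v (f - g) = eval v f - eval v (g :: 'a::comm_ring_1 mpoly)"
  using eval_add[of v f "- g"] by (simp add: eval_uminus)

lemma eval_sum: "eval v (\<Sum>i\<in>A. f i) = (\<Sum>i\<in>A. eval v (f i))"
  by (induction A rule: infinite_finite_induct) (auto simp: eval_add)

lemma eval_single [simp]: "eval v (Poly_Mapping.single \<alpha> c) = c * monom_eval v \<alpha>"
  by (simp add: eval_def)

lemma mult_expand:
  fixes f g :: "'a::comm_semiring_1 mpoly"
  shows "f * g = (\<Sum>\<alpha>\<in>Poly_Mapping.keys f. \<Sum>\<beta>\<in>Poly_Mapping.keys g.
            Poly_Mapping.single (\<alpha> + \<beta>) (Poly_Mapping.lookup f \<alpha> * Poly_Mapping.lookup g \<beta>))"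
proof -
  have "f * g = (\<Sum>\<alpha>\<in>Poly_Mapping.keys f. Poly_Mapping.single \<alpha> (Poly_Mapping.lookup f \<alpha>)) *
                (\<Sum>\<beta>\<in>Poly_Mapping.keys g. Poly_Mapping.single \<beta> (Poly_Mapping.lookup g \<beta>))"
    by (subst poly_expand[of "Poly_Mapping.keys f" f], simp, simp,
        subst poly_expand[of "Poly_Mapping.keys g" g], simp_all)
  also have "\<dots> = (\<Sum>\<alpha>\<in>Poly_Mapping.keys f. \<Sum>\<beta>\<in>Poly_Mapping.keys g.
            Poly_Mapping.single \<alpha> (Poly_Mapping.lookup f \<alpha>) * Poly_Mapping.single \<beta> (Poly_Mapping.lookup g \<beta>))"
    by (simp add: sum_product)
  finally show ?thesis by (simp add: mult_single)
qed

lemma eval_mult: "eval v (f * g) = eval v f * eval v (g :: 'a::comm_semiring_1 mpoly)"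
proof -
  have "eval v (f * g) = (\<Sum>\<alpha>\<in>Poly_Mapping.keys f. \<Sum>\<beta>\<in>Poly_Mapping.keys g.
      (Poly_Mapping.lookup f \<alpha> * monom_eval v \<alpha>) * (Poly_Mapping.lookup g \<beta> * monom_eval v \<beta>))"
    by (subst mult_expand) (simp add: eval_sum mev_add ac_simps)
  also have "\<dots> = eval v f * eval v g"
    by (simp add: eval_def sum_product)
  finally show ?thesis .
qed

lemma eval_one [simp]: "eval v (1 :: 'a::comm_semiring_1 mpoly) = 1"
  by (simp flip: single_one)

lemma eval_power: "eval v (f ^ j) = eval v (f :: 'a::comm_semiring_1 mpoly) ^ j"
  by (induction j) (auto simp: eval_mult)

lemma eval_prod: "eval v (\<Prod>i\<in>A. f i) = (\<Prod>i\<in>A. eval v (f i :: 'a::comm_semiring_1 mpoly))"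
  by (induction A rule: infinite_finite_induct) (auto simp: eval_mult)

lemma eval_const [simp]: "eval v (const c) = c"
  by (simp add: const_def)

section \<open>Homogeneous components\<close>

lemma lookup_hcomp: "Poly_Mapping.lookup (hcomp d f) \<alpha> = (if mdeg \<alpha> = d then Poly_Mapping.lookup f \<alpha> else 0)"
proof -
  have "finite {\<alpha>. (if mdeg \<alpha> = d then Poly_Mapping.lookup f \<alpha> else 0) \<noteq> 0}"
  proof (rule finite_subset[OF _ finite_lookup[of f]])
    show "{\<alpha>. (if mdeg \<alpha> = d then Poly_Mapping.lookup f \<alpha> else 0) \<noteq> 0} \<subseteq> {k. Poly_Mapping.lookup f k \<noteq> 0}"
      by (simp add: Collect_mono)
  qed
  then have "Poly_Mapping.lookup (hcomp d f) = (\<lambda>\<alpha>. if mdeg \<alpha> = d then Poly_Mapping.lookup f \<alpha> else 0)"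
    unfolding hcomp_def by (rule lookup_Abs_poly_mapping)
  then show ?thesis by simp
qed

lemma keys_hcomp: "Poly_Mapping.keys (hcomp d f) = {\<alpha>\<in>Poly_Mapping.keys f. mdeg \<alpha> = d}"
  by (auto simp: in_keys_iff lookup_hcomp split: if_splits)

lemma hcomp_add: "hcomp d (f + g) = hcomp d f + hcomp d g"
  by (rule poly_mapping_eqI) (simp add: lookup_hcomp lookup_add)

lemma hcomp_zero [simp]: "hcomp d 0 = 0"
  by (rule poly_mapping_eqI) (simp add: lookup_hcomp)

lemma hcomp_diff: "hcomp d (f - g) = hcomp d f - hcomp d (g :: 'a::ab_group_add mpoly)"
  by (rule poly_mapping_eqI) (simp add: lookup_hcomp lookup_minus)

lemma hcomp_sum: "hcomp d (\<Sum>i\<in>A. f i) = (\<Sum>i\<in>A. hcomp d (f i))"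
  by (induction A rule: infinite_finite_induct) (auto simp: hcomp_add)

lemma hcomp_single: "hcomp d (Poly_Mapping.single \<alpha> c) = (if mdeg \<alpha> = d then Poly_Mapping.single \<alpha> c else 0)"
  by (rule poly_mapping_eqI) (auto simp: lookup_hcomp lookup_single when_def)

lemma hcomp_expand: "hcomp d f = (\<Sum>\<alpha>\<in>Poly_Mapping.keys f. if mdeg \<alpha> = d then Poly_Mapping.single \<alpha> (Poly_Mapping.lookup f \<alpha>) else 0)"
  by (subst poly_expand[of "Poly_Mapping.keys f" f], simp, simp) (simp add: hcomp_sum hcomp_single)

lemma hcomp_mult:
  fixes f g :: "'a::comm_semiring_1 mpoly"
  shows "hcomp d (f * g) = (\<Sum>d1\<le>d. hcomp d1 f * hcomp (d - d1) g)"
proof -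
  let ?T = "\<lambda>\<alpha> \<beta>. Poly_Mapping.single (\<alpha> + \<beta>) (Poly_Mapping.lookup f \<alpha> * Poly_Mapping.lookup g \<beta>)"
  have "hcomp d (f*g) = (\<Sum>\<alpha>\<in>Poly_Mapping.keys f. \<Sum>\<beta>\<in>Poly_Mapping.keys g.
          if mdeg \<alpha> + mdeg \<beta> = d then ?T \<alpha> \<beta> else 0)"
    by (subst mult_expand) (simp add: hcomp_sum hcomp_single mdeg_add)
  also have "\<dots> = (\<Sum>\<alpha>\<in>Poly_Mapping.keys f. \<Sum>\<beta>\<in>Poly_Mapping.keys g.
          \<Sum>d1\<le>d. if mdeg \<alpha> = d1 \<and> mdeg \<beta> = d - d1 then ?T \<alpha> \<beta> else 0)"
  proof (intro sum.cong refl)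
    fix \<alpha> \<beta>
    show "(if mdeg \<alpha> + mdeg \<beta> = d then ?T \<alpha> \<beta> else 0) =
          (\<Sum>d1\<le>d. if mdeg \<alpha> = d1 \<and> mdeg \<beta> = d - d1 then ?T \<alpha> \<beta> else 0)"
    proof (cases "mdeg \<alpha> + mdeg \<beta> = d")
      case True
      then have "(\<Sum>d1\<le>d. if mdeg \<alpha> = d1 \<and> mdeg \<beta> = d - d1 then ?T \<alpha> \<beta> else 0)
          = (\<Sum>d1\<le>d. if mdeg \<alpha> = d1 then ?T \<alpha> \<beta> else 0)"
        by (intro sum.cong) auto
      also have "\<dots> = ?T \<alpha> \<beta>" using True by (simp add: sum.delta')
      finally show ?thesis using True by simp
    next
      case False
      have "(\<Sum>d1\<le>d. if mdeg \<alpha> = d1 \<and> mdeg \<beta> = d - d1 then ?T \<alpha> \<beta> else 0) = 0"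
        by (rule sum.neutral) (use False in auto)
      then show ?thesis using False by simp
    qed
  qed
  also have "\<dots> = (\<Sum>d1\<le>d. \<Sum>\<alpha>\<in>Poly_Mapping.keys f. \<Sum>\<beta>\<in>Poly_Mapping.keys g.
          if mdeg \<alpha> = d1 \<and> mdeg \<beta> = d - d1 then ?T \<alpha> \<beta> else 0)"
    by (subst sum.swap, subst (2) sum.swap) (rule refl)
  also have "\<dots> = (\<Sum>d1\<le>d. hcomp d1 f * hcomp (d - d1) g)"
  proof (intro sum.cong refl)
    fix d1
    show "(\<Sum>\<alpha>\<in>Poly_Mapping.keys f. \<Sum>\<beta>\<in>Poly_Mapping.keys g.
          if mdeg \<alpha> = d1 \<and> mdeg \<beta> = d - d1 then ?T \<alpha> \<beta> else 0) = hcomp d1 f * hcomp (d - d1) g"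
      unfolding hcomp_expand sum_product
      by (intro sum.cong refl) (auto simp: mult_single)
  qed
  finally show ?thesis .
qed

lemma homog_iff: "homog d f \<longleftrightarrow> (\<forall>\<alpha>. Poly_Mapping.lookup f \<alpha> \<noteq> 0 \<longrightarrow> mdeg \<alpha> = d)"
  by (auto simp: homog_def in_keys_iff)

lemma Pk_iff: "f \<in> Pk k \<longleftrightarrow> (\<forall>\<alpha>. Poly_Mapping.lookup f \<alpha> \<noteq> 0 \<longrightarrow> Poly_Mapping.keys \<alpha> \<subseteq> {..<k})"
  by (auto simp: Pk_def in_keys_iff)

lemma homog_hcomp: "homog d (hcomp d f)"
  by (simp add: homog_iff lookup_hcomp)

lemma homog_hcomp_self: "homog d f \<Longrightarrow> hcomp d f = f"
  by (rule poly_mapping_eqI) (auto simp: homog_iff lookup_hcomp)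

lemma homog_hcomp_other: "homog d f \<Longrightarrow> d' \<noteq> d \<Longrightarrow> hcomp d' f = 0"
  by (rule poly_mapping_eqI) (auto simp: homog_iff lookup_hcomp)

lemma homog_zero [simp]: "homog d 0"
  by (simp add: homog_def)

lemma homog_add: "homog d f \<Longrightarrow> homog d g \<Longrightarrow> homog d (f + g)"
  unfolding homog_iff lookup_add by (metis add.right_neutral)

lemma homog_uminus: "homog d f \<Longrightarrow> homog d (- f :: 'a::ab_group_add mpoly)"
  by (auto simp: homog_iff)

lemma homog_diff: "homog d f \<Longrightarrow> homog d g \<Longrightarrow> homog d (f - g :: 'a::ab_group_add mpoly)"
  unfolding homog_iff lookup_minus by (metis diff_self diff_zero)

lemma homog_sum: "(\<And>i. i \<in> A \<Longrightarrow> homog d (f i)) \<Longrightarrow> homog d (\<Sum>i\<in>A. f i)"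
  by (induction A rule: infinite_finite_induct) (auto intro: homog_add)

lemma homog_single: "mdeg \<alpha> = d \<Longrightarrow> homog d (Poly_Mapping.single \<alpha> c)"
  by (auto simp: homog_iff lookup_single when_def)

lemma homog_mult: "homog a f \<Longrightarrow> homog b g \<Longrightarrow> homog (a + b) (f * g :: 'a::comm_semiring_1 mpoly)"
  unfolding homog_def using keys_mult[of f g] by (force simp: mdeg_add)

lemma homog_one: "homog 0 (1 :: 'a::comm_semiring_1 mpoly)"
  by (simp flip: single_one add: homog_single)

lemma homog_const: "homog 0 (const c)"
  by (simp add: const_def homog_single)

lemma homog_power: "homog a f \<Longrightarrow> homog (j * a) (f ^ j :: 'a::comm_semiring_1 mpoly)"
  by (induction j) (auto simp: homog_one dest: homog_mult)

lemma homog_prod: "(\<And>i. i \<in> A \<Longrightarrow> homog 1 (f i)) \<Longrightarrow> homog (card A) (\<Prod>i\<in>A. f i :: 'a::comm_semiring_1 mpoly)"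
proof (induction A rule: infinite_finite_induct)
  case (insert x F)
  then show ?case using homog_mult[of 1 "f x" "card F" "prod f F"] by simp
qed (auto simp: homog_one)

lemma Pk_zero [simp]: "0 \<in> Pk k"
  by (simp add: Pk_def)

lemma Pk_add: "f \<in> Pk k \<Longrightarrow> g \<in> Pk k \<Longrightarrow> f + g \<in> Pk k"
  unfolding Pk_iff lookup_add by (metis add.right_neutral)

lemma Pk_uminus: "f \<in> Pk k \<Longrightarrow> - f \<in> Pk k"
  for f :: "'a::ab_group_add mpoly"
  by (auto simp: Pk_iff)

lemma Pk_diff: "f \<in> Pk k \<Longrightarrow> g \<in> Pk k \<Longrightarrow> f - g \<in> Pk k"
  for f :: "'a::ab_group_add mpoly"
  unfolding Pk_iff lookup_minus by (metis diff_self diff_zero)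

lemma Pk_sum: "(\<And>i. i \<in> A \<Longrightarrow> f i \<in> Pk k) \<Longrightarrow> (\<Sum>i\<in>A. f i) \<in> Pk k"
  by (induction A rule: infinite_finite_induct) (auto intro: Pk_add)

lemma Pk_single: "Poly_Mapping.keys \<alpha> \<subseteq> {..<k} \<Longrightarrow> Poly_Mapping.single \<alpha> c \<in> Pk k"
  by (auto simp: Pk_iff lookup_single when_def)

lemma Pk_mult: "f \<in> Pk k \<Longrightarrow> g \<in> Pk k \<Longrightarrow> f * g \<in> Pk k"
  for f :: "'a::comm_semiring_1 mpoly"
  unfolding Pk_def using keys_mult[of f g] by (force simp: keys_add_nat)

lemma Pk_one: "(1 :: 'a::comm_semiring_1 mpoly) \<in> Pk k"
  by (simp flip: single_one add: Pk_single)

lemma Pk_const: "const c \<in> Pk k"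
  by (simp add: const_def Pk_single)

lemma Pk_power: "f \<in> Pk k \<Longrightarrow> f ^ j \<in> Pk k"
  for f :: "'a::comm_semiring_1 mpoly"
  by (induction j) (auto simp: Pk_one Pk_mult)

lemma Pk_prod: "(\<And>i. i \<in> A \<Longrightarrow> f i \<in> Pk k) \<Longrightarrow> (\<Prod>i\<in>A. f i) \<in> Pk k"
  for f :: "_ \<Rightarrow> 'a::comm_semiring_1 mpoly"
  by (induction A rule: infinite_finite_induct) (auto intro: Pk_mult simp: Pk_one)

lemma Pk_hcomp: "f \<in> Pk k \<Longrightarrow> hcomp d f \<in> Pk k"
  by (auto simp: Pk_def keys_hcomp)

lemma Pd_iff: "f \<in> Pd k d \<longleftrightarrow> f \<in> Pk k \<and> homog d f"
  by (simp add: Pd_def)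

lemma hcomp_Pd: "f \<in> Pk k \<Longrightarrow> hcomp d f \<in> Pd k d"
  by (simp add: Pd_iff Pk_hcomp homog_hcomp)

lemma eval_homog0: "homog 0 f \<Longrightarrow> eval v f = Poly_Mapping.lookup f 0"
proof -
  assume h: "homog 0 f"
  have "eval v f = (\<Sum>\<alpha>\<in>{0}. Poly_Mapping.lookup f \<alpha> * monom_eval v \<alpha>)"
    by (rule eval_superset) (use h in \<open>auto simp: homog_def dest: mdeg_eq_0\<close>)
  then show ?thesis by simp
qed



lemma sum_upd_remove:
  assumes "finite M" "x \<in> M"
  shows "(\<Sum>\<beta>\<in>M. (a(x := c)) \<beta> * X \<beta>) = c * X x + (\<Sum>\<beta>\<in>M - {x}. a \<beta> * X \<beta>)"
proof -
  have "(\<Sum>\<beta>\<in>M. (a(x := c)) \<beta> * X \<beta>) = (a(x := c)) x * X x + (\<Sum>\<beta>\<in>M - {x}. (a(x := c)) \<beta> * X \<beta>)"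
    using assms by (rule sum.remove)
  also have "(\<Sum>\<beta>\<in>M - {x}. (a(x := c)) \<beta> * X \<beta>) = (\<Sum>\<beta>\<in>M - {x}. a \<beta> * X \<beta>)"
    by (intro sum.cong) auto
  finally show ?thesis by simp
qed

lemma fredholm:
  fixes B :: "'m \<Rightarrow> 'h \<Rightarrow> 'a::field" and \<psi> :: "'m \<Rightarrow> 'a"
  assumes "finite H" "finite M"
    and "\<forall>a. (\<forall>h\<in>H. (\<Sum>\<beta>\<in>M. a \<beta> * B \<beta> h) = 0) \<longrightarrow> (\<Sum>\<beta>\<in>M. a \<beta> * \<psi> \<beta>) = 0"
  shows "\<exists>b. \<forall>\<beta>\<in>M. \<psi> \<beta> = (\<Sum>h\<in>H. b h * B \<beta> h)"
  using assms
proof (induction H arbitrary: M B \<psi> rule: finite_induct)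
  case empty
  have "\<psi> \<beta> = 0" if "\<beta> \<in> M" for \<beta>
  proof -
    have "(\<Sum>x\<in>M. (if x = \<beta> then 1 else 0) * \<psi> x) = 0" using empty.prems(2) by auto
    moreover have "(\<Sum>x\<in>M. (if x = \<beta> then 1 else 0) * \<psi> x) = (\<Sum>x\<in>M. if x = \<beta> then \<psi> x else 0)"
      by (intro sum.cong) auto
    ultimately show ?thesis using that empty.prems(1) by (simp add: sum.delta)
  qed
  then show ?case by simp
next
  case (insert h0 H')
  note fin = insert.prems(1)
  show ?case
  proof (cases "\<forall>\<beta>\<in>M. B \<beta> h0 = 0")
    case True
    have "\<forall>a. (\<forall>h\<in>H'. (\<Sum>\<beta>\<in>M. a \<beta> * B \<beta> h) = 0) \<longrightarrow> (\<Sum>\<beta>\<in>M. a \<beta> * \<psi> \<beta>) = 0"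
    proof (intro allI impI)
      fix a assume a: "\<forall>h\<in>H'. (\<Sum>\<beta>\<in>M. a \<beta> * B \<beta> h) = 0"
      have "(\<Sum>\<beta>\<in>M. a \<beta> * B \<beta> h0) = 0" using True by simp
      then show "(\<Sum>\<beta>\<in>M. a \<beta> * \<psi> \<beta>) = 0" using a insert.prems(2) by auto
    qed
    then obtain b where b: "\<forall>\<beta>\<in>M. \<psi> \<beta> = (\<Sum>h\<in>H'. b h * B \<beta> h)"
      using insert.IH[OF fin] by blast
    have "\<forall>\<beta>\<in>M. \<psi> \<beta> = (\<Sum>h\<in>insert h0 H'. b h * B \<beta> h)"
      using b True insert.hyps by simp
    then show ?thesis by blast
  next
    case False
    then obtain \<beta>0 where \<beta>0: "\<beta>0 \<in> M" and p: "B \<beta>0 h0 \<noteq> 0" by blast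
    define p where "p = B \<beta>0 h0"
    define M' where "M' = M - {\<beta>0}"
    define B' where "B' \<beta> h = B \<beta> h - B \<beta> h0 / p * B \<beta>0 h" for \<beta> h
    define \<psi>' where "\<psi>' \<beta> = \<psi> \<beta> - B \<beta> h0 / p * \<psi> \<beta>0" for \<beta>
    have pnz: "p \<noteq> 0" using p by (simp add: p_def)
    have finM': "finite M'" using fin by (simp add: M'_def)
    have "\<forall>a. (\<forall>h\<in>H'. (\<Sum>\<beta>\<in>M'. a \<beta> * B' \<beta> h) = 0) \<longrightarrow> (\<Sum>\<beta>\<in>M'. a \<beta> * \<psi>' \<beta>) = 0"
    proof (intro allI impI)
      fix a' assume a': "\<forall>h\<in>H'. (\<Sum>\<beta>\<in>M'. a' \<beta> * B' \<beta> h) = 0"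
      define S0 where "S0 = (\<Sum>\<beta>\<in>M'. a' \<beta> * B \<beta> h0)"
      define a where "a = a'(\<beta>0 := - S0 / p)"
      have split: "(\<Sum>\<beta>\<in>M. a \<beta> * X \<beta>) = - S0 / p * X \<beta>0 + (\<Sum>\<beta>\<in>M'. a' \<beta> * X \<beta>)" for X
        unfolding a_def M'_def by (rule sum_upd_remove[OF fin \<beta>0])
      have gen: "(\<Sum>\<beta>\<in>M'. a' \<beta> * (X \<beta> - B \<beta> h0 / p * c)) = (\<Sum>\<beta>\<in>M'. a' \<beta> * X \<beta>) - S0 / p * c" for X c
      proof -
        have "(\<Sum>\<beta>\<in>M'. a' \<beta> * (X \<beta> - B \<beta> h0 / p * c)) = (\<Sum>\<beta>\<in>M'. a' \<beta> * X \<beta> - (a' \<beta> * B \<beta> h0) * (c / p))"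
          by (intro sum.cong) (auto simp: algebra_simps)
        also have "\<dots> = (\<Sum>\<beta>\<in>M'. a' \<beta> * X \<beta>) - S0 * (c / p)"
          by (simp only: sum_subtractf S0_def sum_distrib_right)
        finally show ?thesis by simp
      qed
      have "\<forall>h\<in>insert h0 H'. (\<Sum>\<beta>\<in>M. a \<beta> * B \<beta> h) = 0"
      proof
        fix h assume h: "h \<in> insert h0 H'"
        show "(\<Sum>\<beta>\<in>M. a \<beta> * B \<beta> h) = 0"
        proof (cases "h = h0")
          case True
          then show ?thesis unfolding split using pnz by (simp add: p_def S0_def)
        next
          case False
          then have hH: "h \<in> H'" using h by simp
          have "(\<Sum>\<beta>\<in>M'. a' \<beta> * B' \<beta> h) = (\<Sum>\<beta>\<in>M'. a' \<beta> * B \<beta> h) - S0 / p * B \<beta>0 h"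
            unfolding B'_def by (rule gen)
          then show ?thesis unfolding split using a' hH by simp
        qed
      qed
      then have "(\<Sum>\<beta>\<in>M. a \<beta> * \<psi> \<beta>) = 0" using insert.prems(2) by blast
      moreover have "(\<Sum>\<beta>\<in>M'. a' \<beta> * \<psi>' \<beta>) = (\<Sum>\<beta>\<in>M'. a' \<beta> * \<psi> \<beta>) - S0 / p * \<psi> \<beta>0"
        unfolding \<psi>'_def by (rule gen)
      ultimately show "(\<Sum>\<beta>\<in>M'. a' \<beta> * \<psi>' \<beta>) = 0" unfolding split by simp
    qed
    then obtain b' where b': "\<forall>\<beta>\<in>M'. \<psi>' \<beta> = (\<Sum>h\<in>H'. b' h * B' \<beta> h)"
      using insert.IH[OF finM'] by blast
    define T where "T \<beta> = (\<Sum>h\<in>H'. b' h * B \<beta> h)" for \<beta>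
    define b where "b = b'(h0 := (\<psi> \<beta>0 - T \<beta>0) / p)"
    have bsum: "(\<Sum>h\<in>insert h0 H'. b h * B \<beta> h) = (\<psi> \<beta>0 - T \<beta>0) / p * B \<beta> h0 + T \<beta>" for \<beta>
    proof -
      have "(\<Sum>h\<in>H'. b h * B \<beta> h) = T \<beta>"
        unfolding T_def b_def using insert.hyps(2) by (intro sum.cong) auto
      then show ?thesis using insert.hyps by (simp add: b_def)
    qed
    have "\<forall>\<beta>\<in>M. \<psi> \<beta> = (\<Sum>h\<in>insert h0 H'. b h * B \<beta> h)"
    proof
      fix \<beta> assume \<beta>: "\<beta> \<in> M"
      show "\<psi> \<beta> = (\<Sum>h\<in>insert h0 H'. b h * B \<beta> h)"
      proof (cases "\<beta> = \<beta>0")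
        case True
        then show ?thesis unfolding bsum using pnz by (simp add: p_def)
      next
        case False
        then have \<beta>M': "\<beta> \<in> M'" using \<beta> by (simp add: M'_def)
        have "(\<Sum>h\<in>H'. b' h * B' \<beta> h) = T \<beta> - B \<beta> h0 / p * T \<beta>0"
          unfolding B'_def T_def
          by (simp add: right_diff_distrib sum_subtractf sum_distrib_left mult_ac)
        then have "\<psi> \<beta> - B \<beta> h0 / p * \<psi> \<beta>0 = T \<beta> - B \<beta> h0 / p * T \<beta>0"
          using b' \<beta>M' by (simp add: \<psi>'_def)
        then show ?thesis unfolding bsum using pnz by (simp add: field_simps)
      qed
    qed
    then show ?thesis by blast
  qed
qed



locale pts =
  fixes k n :: nat and v :: "nat \<Rightarrow> nat \<Rightarrow> 'a::{field,finite}" and L :: "'a mpoly"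
  assumes n2: "n \<ge> 2"
    and dist: "\<forall>i<n. \<forall>j<n. i \<noteq> j \<longrightarrow> (\<exists>t<k. v i t \<noteq> v j t)"
    and LPd: "L \<in> Pd k 1"
    and Lev: "\<forall>i<n. eval (v i) L = 1"
begin

definition ev :: "'a mpoly \<Rightarrow> nat \<Rightarrow> nat \<Rightarrow> 'a" where
  "ev f m d = eval (v m) (hcomp d f)"

abbreviation "I \<equiv> vanish_ideal k n v"

lemma I_iff: "f \<in> I \<longleftrightarrow> f \<in> Pk k \<and> (\<forall>m<n. \<forall>d. ev f m d = 0)"
  by (auto simp: vanish_ideal_def ev_def)

lemma ev_add: "ev (f + g) m d = ev f m d + ev g m d"
  by (simp add: ev_def hcomp_add eval_add)

lemma ev_diff: "ev (f - g) m d = ev f m d - ev g m d"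
  by (simp add: ev_def hcomp_diff eval_diff)

lemma ev_zero [simp]: "ev 0 m d = 0"
  by (simp add: ev_def)

lemma ev_sum: "ev (\<Sum>i\<in>A. f i) m d = (\<Sum>i\<in>A. ev (f i) m d)"
  by (simp add: ev_def hcomp_sum eval_sum)

lemma ev_mult: "ev (f * g) m d = (\<Sum>d1\<le>d. ev f m d1 * ev g m (d - d1))"
  by (simp add: ev_def hcomp_mult eval_sum eval_mult)

lemma ev_homog: "homog D f \<Longrightarrow> ev f m d = (if d = D then eval (v m) f else 0)"
  by (simp add: ev_def homog_hcomp_self homog_hcomp_other)

lemma ev_const: "ev (const c) m d = (if d = 0 then c else 0)"
  by (simp add: ev_homog[OF homog_const])

lemma ev_const_mult: "ev (const c * f) m d = c * ev f m d"
proof -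
  have "ev (const c * f) m d = (\<Sum>d1\<le>d. (if d1 = 0 then c else 0) * ev f m (d - d1))"
    by (simp add: ev_mult ev_const)
  also have "\<dots> = (\<Sum>d1\<le>d. if d1 = 0 then c * ev f m (d - d1) else 0)"
    by (intro sum.cong) auto
  also have "\<dots> = c * ev f m d"
    by (simp add: sum.delta)
  finally show ?thesis .
qed

lemma L_homog: "homog 1 L" and L_Pk: "L \<in> Pk k"
  using LPd by (auto simp: Pd_iff)

lemma eval_Lpow: "m < n \<Longrightarrow> eval (v m) (L ^ j) = 1"
  using Lev by (simp add: eval_power)

lemma ev_Lpow: "m < n \<Longrightarrow> ev (L ^ j) m d = (if d = j then 1 else 0)"
  using homog_power[OF L_homog, of j] by (simp add: ev_homog eval_Lpow)

lemma ev_Lpow_mult: "m < n \<Longrightarrow> ev (L ^ j * f) m d = (if j \<le> d then ev f m (d - j) else 0)"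
proof -
  assume m: "m < n"
  have "ev (L ^ j * f) m d = (\<Sum>d1\<le>d. (if d1 = j then 1 else 0) * ev f m (d - d1))"
    by (simp add: ev_mult ev_Lpow[OF m])
  also have "\<dots> = (\<Sum>d1\<le>d. if d1 = j then ev f m (d - d1) else 0)"
    by (intro sum.cong) auto
  also have "\<dots> = (if j \<le> d then ev f m (d - j) else 0)"
    by (simp add: sum.delta)
  finally show ?thesis .
qed

lemma ev_single: "ev (Poly_Mapping.single \<alpha> c) m d = (if mdeg \<alpha> = d then c * monom_eval (v m) \<alpha> else 0)"
  by (simp add: ev_def hcomp_single)

lemma eq_mod_I: "f \<in> Pk k \<Longrightarrow> g \<in> Pk k \<Longrightarrow> (\<And>m d. m < n \<Longrightarrow> ev f m d = ev g m d) \<Longrightarrow> f - g \<in> I"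
  by (simp add: I_iff Pk_diff ev_diff)

lemma I_ev: "f - g \<in> I \<Longrightarrow> m < n \<Longrightarrow> ev f m d = ev g m d"
  by (simp add: I_iff ev_diff)

definition mx :: "'a mpoly \<Rightarrow> nat" where
  "mx f = Max (insert 0 (mdeg ` Poly_Mapping.keys f))"

lemma mdeg_le_mx: "\<alpha> \<in> Poly_Mapping.keys f \<Longrightarrow> mdeg \<alpha> \<le> mx f"
  unfolding mx_def by (intro Max_ge) auto

lemma hcomp_big: "mx f < d \<Longrightarrow> hcomp d f = 0"
  by (rule poly_mapping_eqI) (simp add: lookup_hcomp, metis in_keys_iff mdeg_le_mx not_le)

lemma ev_big: "mx f < d \<Longrightarrow> ev f m d = 0"
  by (simp add: ev_def hcomp_big)

lemma ev_Lsum: "m < n \<Longrightarrow> ev (\<Sum>j\<le>B. const (c j) * L ^ j) m d = (if d \<le> B then c d else 0)"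
proof -
  assume m: "m < n"
  have "ev (\<Sum>j\<le>B. const (c j) * L ^ j) m d = (\<Sum>j\<le>B. c j * (if d = j then 1 else 0))"
    by (simp add: ev_sum ev_const_mult ev_Lpow[OF m])
  also have "\<dots> = (\<Sum>j\<le>B. if j = d then c j else 0)"
    by (intro sum.cong) auto
  finally have "ev (\<Sum>j\<le>B. const (c j) * L ^ j) m d = (\<Sum>j\<le>B. if j = d then c j else 0)" .
  then show ?thesis by (simp add: sum.delta')
qed

section \<open>Surjectivity of evaluation and the regularity index\<close>

definition surjd :: "nat \<Rightarrow> bool" where
  "surjd d \<longleftrightarrow> (\<forall>w. \<exists>f\<in>Pd k d. \<forall>m<n. eval (v m) f = w m)"

lemma surj_mono: "surjd d \<Longrightarrow> d \<le> e \<Longrightarrow> surjd e"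
  unfolding surjd_def
proof (intro allI)
  fix w assume s: "\<forall>w. \<exists>f\<in>Pd k d. \<forall>m<n. eval (v m) f = w m" and de: "d \<le> e"
  obtain f where f: "f \<in> Pd k d" "\<forall>m<n. eval (v m) f = w m" using s by blast
  have "L ^ (e - d) * f \<in> Pd k e"
    using f(1) homog_mult[OF homog_power[OF L_homog, of "e - d"], of d f] de
    by (auto simp: Pd_iff Pk_mult Pk_power L_Pk)
  moreover have "\<forall>m<n. eval (v m) (L ^ (e - d) * f) = w m"
    using f(2) by (simp add: eval_mult eval_Lpow)
  ultimately show "\<exists>f\<in>Pd k e. \<forall>m<n. eval (v m) f = w m" by (intro bexI[of _ "L ^ (e - d) * f"])
qed

lemma not_surj0: "\<not> surjd 0"
proof
  assume "surjd 0"
  then have "\<exists>f\<in>Pd k 0. \<forall>m<n. eval (v m) f = (if m = 0 then 1 else 0)"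
    unfolding surjd_def by (rule spec)
  then obtain f where f: "f \<in> Pd k 0" "\<forall>m<n. eval (v m) f = (if m = 0 then 1 else 0)"
    by blast
  have "eval (v 0) f = eval (v 1) f" using f(1) by (simp add: Pd_iff eval_homog0)
  moreover have "eval (v 0) f = 1" using f(2) n2 by simp
  moreover have "eval (v 1) f = 0" using f(2) n2 by simp
  ultimately show False by simp
qed

lemma mdeg_single1: "mdeg (Poly_Mapping.single t (1::nat)) = 1"
  by (simp add: mdeg_def)

lemma mev_single1: "monom_eval w (Poly_Mapping.single t (1::nat)) = w t"
  by (simp add: monom_eval_def)

lemma mev_single1': "monom_eval w (Poly_Mapping.single t (Suc 0)) = w t"
  using mev_single1 by simp

lemma surj_ex: "surjd (n - 1)"
  unfolding surjd_def
proof
  fix w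
  define tt where "tt i j = (SOME t. t < k \<and> v i t \<noteq> v j t)" for i j
  have tt: "tt i j < k \<and> v i (tt i j) \<noteq> v j (tt i j)" if "i < n" "j < n" "i \<noteq> j" for i j
    unfolding tt_def by (rule someI_ex) (use dist that in blast)
  define l where "l i j = const (v j (tt i j)) * L - Poly_Mapping.single (Poly_Mapping.single (tt i j) 1) 1" for i j
  have lPd: "l i j \<in> Pd k 1" if "i < n" "j < n" "i \<noteq> j" for i j
  proof -
    have "homog 1 (const (v j (tt i j)) * L)" using homog_mult[OF homog_const L_homog] by simp
    moreover have "homog 1 (Poly_Mapping.single (Poly_Mapping.single (tt i j) (1::nat)) (1::'a))"
      by (rule homog_single) (rule mdeg_single1)
    moreover have "Poly_Mapping.single (Poly_Mapping.single (tt i j) (1::nat)) (1::'a) \<in> Pk k"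
      by (rule Pk_single) (use tt[OF that] in auto)
    ultimately show ?thesis
      by (auto simp: l_def Pd_iff intro!: homog_diff Pk_diff Pk_mult Pk_const L_Pk)
  qed
  have lev: "eval (v m) (l i j) = v j (tt i j) - v m (tt i j)" if "m < n" for i j m
    using that Lev by (simp add: l_def eval_diff eval_mult mev_single1 mev_single1')
  define q where "q i = (\<Prod>j\<in>{..<n} - {i}. l i j)" for i
  have qPd: "q i \<in> Pd k (n - 1)" if "i < n" for i
  proof -
    have c: "card ({..<n} - {i}) = n - 1" using that by simp
    have "\<And>j. j \<in> {..<n} - {i} \<Longrightarrow> l i j \<in> Pd k 1" using lPd that by auto
    then have "\<And>j. j \<in> {..<n} - {i} \<Longrightarrow> homog 1 (l i j)" "\<And>j. j \<in> {..<n} - {i} \<Longrightarrow> l i j \<in> Pk k"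
      by (auto simp: Pd_iff)
    then show ?thesis unfolding q_def Pd_iff
      using homog_prod[of "{..<n} - {i}" "l i"] c by (auto intro!: Pk_prod)
  qed
  have qev: "eval (v m) (q i) = (\<Prod>j\<in>{..<n} - {i}. v j (tt i j) - v m (tt i j))" if "m < n" for i m
    using that by (simp add: q_def eval_prod lev)
  have q0: "eval (v m) (q i) = 0" if "m < n" "i < n" "m \<noteq> i" for m i
    using that by (simp add: qev) (rule bexI[of _ m], auto)
  have q1: "eval (v i) (q i) \<noteq> 0" if "i < n" for i
    using that by (simp add: qev) (metis DiffE lessThan_iff singletonI tt)
  define f where "f = (\<Sum>i<n. const (w i / eval (v i) (q i)) * q i)"
  have "f \<in> Pd k (n - 1)"
    unfolding f_def Pd_iff using qPd homog_mult[OF homog_const, of "n-1"]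
    by (auto simp: Pd_iff intro!: Pk_sum Pk_mult Pk_const homog_sum)
  moreover have "\<forall>m<n. eval (v m) f = w m"
  proof (intro allI impI)
    fix m assume m: "m < n"
    have "eval (v m) f = (\<Sum>i<n. w i / eval (v i) (q i) * eval (v m) (q i))"
      by (simp add: f_def eval_sum eval_mult)
    also have "\<dots> = (\<Sum>i<n. if i = m then w m else 0)"
      by (intro sum.cong refl) (use m q0 q1 in auto)
    also have "\<dots> = w m" using m by simp
    finally show "eval (v m) f = w m" .
  qed
  ultimately show "\<exists>f\<in>Pd k (n - 1). \<forall>m<n. eval (v m) f = w m" by blast
qed

end


context pts begin

lemma reg_char: "card (Rdeg k n v d) = card (UNIV :: 'a set) ^ n \<longleftrightarrow> surjd d"
proof -
  define E where "E f = restrict (\<lambda>m. eval (v m) f) {..<n}" for f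
  have Eeq: "E f = E g \<longleftrightarrow> (\<forall>m<n. eval (v m) f = eval (v m) g)" for f g
    unfolding E_def by (auto simp: restrict_def fun_eq_iff)
  have rel: "f - g \<in> I \<longleftrightarrow> E f = E g" if "f \<in> Pd k d" "g \<in> Pd k d" for f g
  proof
    assume "f - g \<in> I"
    then have "ev f m d = ev g m d" if "m < n" for m using I_ev that by blast
    then show "E f = E g" unfolding Eeq using \<open>f \<in> Pd k d\<close> \<open>g \<in> Pd k d\<close>
      by (auto simp: Pd_iff ev_homog)
  next
    assume "E f = E g"
    then show "f - g \<in> I" using that
      by (intro eq_mod_I) (auto simp: Pd_iff ev_homog Eeq)
  qed
  have R: "Rdeg k n v d = (\<lambda>y. {g\<in>Pd k d. E g = y}) ` (E ` Pd k d)"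
    unfolding Rdeg_def quotient_def
  proof (intro equalityI subsetI)
    fix X assume "X \<in> (\<Union>x\<in>Pd k d. {{(f, g). f \<in> Pd k d \<and> g \<in> Pd k d \<and> f - g \<in> I} `` {x}})"
    then obtain x where x: "x \<in> Pd k d" "X = {(f, g). f \<in> Pd k d \<and> g \<in> Pd k d \<and> f - g \<in> I} `` {x}"
      by blast
    have "X = {g. g \<in> Pd k d \<and> x - g \<in> I}" using x by auto
    also have "\<dots> = {g\<in>Pd k d. E g = E x}" by (intro Collect_cong) (metis rel[OF x(1)])
    finally show "X \<in> (\<lambda>y. {g\<in>Pd k d. E g = y}) ` (E ` Pd k d)" using x(1) by blast
  next
    fix X assume "X \<in> (\<lambda>y. {g\<in>Pd k d. E g = y}) ` (E ` Pd k d)"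
    then obtain x where x: "x \<in> Pd k d" "X = {g\<in>Pd k d. E g = E x}" by blast
    have "{(f, g). f \<in> Pd k d \<and> g \<in> Pd k d \<and> f - g \<in> I} `` {x} = {g. g \<in> Pd k d \<and> x - g \<in> I}"
      using x by auto
    also have "\<dots> = {g\<in>Pd k d. E g = E x}" by (intro Collect_cong) (metis rel[OF x(1)])
    finally have "X = {(f, g). f \<in> Pd k d \<and> g \<in> Pd k d \<and> f - g \<in> I} `` {x}" using x(2) by simp
    then show "X \<in> (\<Union>x\<in>Pd k d. {{(f, g). f \<in> Pd k d \<and> g \<in> Pd k d \<and> f - g \<in> I} `` {x}})"
      using x(1) by blast
  qed
  have inj: "inj_on (\<lambda>y. {g\<in>Pd k d. E g = y}) (E ` Pd k d)"
  proof (rule inj_onI)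
    fix y y' assume y: "y \<in> E ` Pd k d" and "y' \<in> E ` Pd k d"
      and eq: "{g\<in>Pd k d. E g = y} = {g\<in>Pd k d. E g = y'}"
    from y obtain f where f: "f \<in> Pd k d" "y = E f" by blast
    then have "f \<in> {g\<in>Pd k d. E g = y}" by simp
    then have "f \<in> {g\<in>Pd k d. E g = y'}" using eq by simp
    then show "y = y'" using f by simp
  qed
  have cR: "card (Rdeg k n v d) = card (E ` Pd k d)"
    unfolding R by (rule card_image[OF inj])
  let ?Q = "{..<n} \<rightarrow>\<^sub>E (UNIV :: 'a set)"
  have sub: "E ` Pd k d \<subseteq> ?Q"
  proof (rule image_subsetI)
    fix f show "E f \<in> ?Q" unfolding E_def restrict_PiE by simp
  qed
  have fQ: "finite ?Q" by (rule finite_PiE) auto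
  have cQ: "card ?Q = card (UNIV :: 'a set) ^ n" by (simp add: card_PiE)
  have "card (Rdeg k n v d) = card (UNIV :: 'a set) ^ n \<longleftrightarrow> E ` Pd k d = ?Q"
    using card_subset_eq[OF fQ sub] cR cQ by auto
  also have "\<dots> \<longleftrightarrow> surjd d"
  proof
    assume eq: "E ` Pd k d = ?Q"
    show "surjd d" unfolding surjd_def
    proof
      fix w
      have "restrict w {..<n} \<in> ?Q" by auto
      then obtain f where f: "f \<in> Pd k d" "E f = restrict w {..<n}" using eq by (metis imageE)
      have "\<forall>m<n. eval (v m) f = w m"
      proof (intro allI impI)
        fix m assume m: "m < n"
        have "E f m = w m" using f(2) m by simp
        then show "eval (v m) f = w m" using m by (simp add: E_def)
      qed
      then show "\<exists>f\<in>Pd k d. \<forall>m<n. eval (v m) f = w m" using f(1) by blast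
    qed
  next
    assume s: "surjd d"
    show "E ` Pd k d = ?Q"
    proof (intro equalityI sub subsetI)
      fix w assume w: "w \<in> ?Q"
      obtain f where f: "f \<in> Pd k d" "\<forall>m<n. eval (v m) f = w m" using s unfolding surjd_def by blast
      have "E f = restrict w {..<n}" unfolding E_def using f(2) by (intro restrict_ext) auto
      also have "\<dots> = w" using w by (rule PiE_restrict)
      finally show "w \<in> E ` Pd k d" using f(1) by blast
    qed
  qed
  finally show ?thesis .
qed

abbreviation "r \<equiv> reg_index k n v"

lemma r_least: "r = (LEAST d. surjd d)"
  by (simp add: reg_index_def reg_char)

lemma surj_r: "surjd r"
  unfolding r_least by (rule LeastI[where P=surjd, OF surj_ex])

lemma r_pos: "r \<ge> 1"
  using surj_r not_surj0 by (cases r) auto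

lemma surj_ge: "r \<le> e \<Longrightarrow> surjd e"
  using surj_mono[OF surj_r] .

abbreviation "sep i \<equiv> separator k n v i"

lemma sep: "sep i \<in> Pd k r \<and> (\<forall>m<n. eval (v m) (sep i) = (if m = i then 1 else 0))"
proof -
  have "\<exists>F. F \<in> Pd k r \<and> (\<forall>j<n. eval (v j) F = (if j = i then 1 else 0))"
  proof -
    have "\<exists>F\<in>Pd k r. \<forall>j<n. eval (v j) F = (if j = i then 1 else 0)"
      using surj_r unfolding surjd_def by (rule spec)
    then show ?thesis by blast
  qed
  then show ?thesis unfolding separator_def by (rule someI_ex)
qed

lemma sep_Pk: "sep i \<in> Pk k"
  using sep by (auto simp: Pd_iff)

lemma ev_sep: "m < n \<Longrightarrow> ev (sep i) m d = (if d = r \<and> m = i then 1 else 0)"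
  using sep[of i] by (auto simp: Pd_iff ev_homog)

end


context pts begin

abbreviation "FLs \<equiv> FL k n v L"

lemma zero_I: "0 \<in> I"
  by (simp add: I_iff)

lemma FL_Pk: "a \<in> FLs \<Longrightarrow> a \<in> Pk k"
  by (simp add: FL_def)

lemma FL_ev: "a \<in> FLs \<Longrightarrow> \<exists>\<alpha>. \<forall>m<n. \<forall>d. ev a m d = \<alpha> d"
proof -
  assume "a \<in> FLs"
  then obtain M c where "a - (\<Sum>j\<le>M. const (c j) * L ^ j) \<in> I" by (auto simp: FL_def)
  then have "\<forall>m<n. \<forall>d. ev a m d = (if d \<le> M then c d else 0)"
    using I_ev ev_Lsum by metis
  then show ?thesis by (intro exI[where x="\<lambda>d. if d \<le> M then c d else 0"]) simp
qed

lemma Lsum_Pk: "(\<Sum>j\<le>B. const (c j) * L ^ j) \<in> Pk k"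
  by (intro Pk_sum Pk_mult Pk_const Pk_power L_Pk)

lemma FL_intro: "a \<in> Pk k \<Longrightarrow> (\<And>m d. m < n \<Longrightarrow> ev a m d = (if d \<le> M then c d else 0)) \<Longrightarrow> a \<in> FLs"
  unfolding FL_def by (auto intro!: exI[of _ M] exI[of _ c] eq_mod_I Lsum_Pk simp: ev_Lsum)

lemma const_FL: "const c \<in> FLs"
  by (rule FL_intro[where M=0 and c="\<lambda>_. c"]) (auto simp: Pk_const ev_const)

lemma Lpow_FL: "L ^ j \<in> FLs"
  by (rule FL_intro[where M=j and c="\<lambda>i. if i = j then 1 else 0"]) (auto simp: Pk_power L_Pk ev_Lpow)

lemma ev_mult_sep: "m < n \<Longrightarrow> ev (x * sep i) m d = (if r \<le> d \<and> m = i then ev x m (d - r) else 0)"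
proof -
  assume m: "m < n"
  have "ev (x * sep i) m d = (\<Sum>d1\<le>d. ev x m d1 * (if d - d1 = r \<and> m = i then 1 else 0))"
    by (simp add: ev_mult ev_sep[OF m])
  also have "\<dots> = (\<Sum>d1\<le>d. if d1 = d - r then (if r \<le> d \<and> m = i then ev x m d1 else 0) else 0)"
    by (intro sum.cong) auto
  also have "\<dots> = (if r \<le> d \<and> m = i then ev x m (d - r) else 0)"
    by (simp add: sum.delta')
  finally show ?thesis .
qed

lemma ev_sum_sep: "m < n \<Longrightarrow> ev (\<Sum>i<n. x i * sep i) m d = (if r \<le> d then ev (x m) m (d - r) else 0)"
  by (simp add: ev_sum ev_mult_sep if_distrib sum.delta cong: if_cong)

definition Ccond :: "'a mpoly \<Rightarrow> bool" where
  "Ccond g \<longleftrightarrow> (\<forall>d<2*r. \<forall>h\<in>Pd k (2*r - 1 - d). (\<Sum>i<n. ev g i d * eval (v i) h) = 0)"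

section \<open>Facts about lifted homomorphisms\<close>

context
  fixes \<phi> assumes hom: "is_FL_hom k n v L \<phi>"
begin

lemma phi_FL: "f \<in> Pk k \<Longrightarrow> \<phi> f \<in> FLs"
  using hom by (simp add: is_FL_hom_def)

lemma phi_wd: "f \<in> Pk k \<Longrightarrow> g \<in> Pk k \<Longrightarrow> f - g \<in> I \<Longrightarrow> m < n \<Longrightarrow> ev (\<phi> f) m d = ev (\<phi> g) m d"
  using hom I_ev by (simp add: is_FL_hom_def)

lemma phi_add: "f \<in> Pk k \<Longrightarrow> g \<in> Pk k \<Longrightarrow> m < n \<Longrightarrow> ev (\<phi> (f + g)) m d = ev (\<phi> f) m d + ev (\<phi> g) m d"
  using hom I_ev[of "\<phi> (f + g)" "\<phi> f + \<phi> g"] by (simp add: is_FL_hom_def ev_add)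

lemma phi_lin: "a \<in> FLs \<Longrightarrow> f \<in> Pk k \<Longrightarrow> m < n \<Longrightarrow> ev (\<phi> (a * f)) m d = ev (a * \<phi> f) m d"
  using hom I_ev[of "\<phi> (a * f)" "a * \<phi> f"] by (simp add: is_FL_hom_def)

lemma phi_zero: "m < n \<Longrightarrow> ev (\<phi> 0) m d = 0"
proof -
  assume m: "m < n"
  have "ev (\<phi> 0) m d = ev (\<phi> 0) m d + ev (\<phi> 0) m d" using phi_add[of 0 0 m d] m by simp
  then show ?thesis by (metis add_cancel_right_right)
qed

lemma phi_sum: "(\<And>i. i \<in> A \<Longrightarrow> x i \<in> Pk k) \<Longrightarrow> m < n \<Longrightarrow>
    ev (\<phi> (\<Sum>i\<in>A. x i)) m d = (\<Sum>i\<in>A. ev (\<phi> (x i)) m d)"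
proof (induction A rule: infinite_finite_induct)
  case (insert a F)
  have "ev (\<phi> (x a + (\<Sum>i\<in>F. x i))) m d = ev (\<phi> (x a)) m d + ev (\<phi> (\<Sum>i\<in>F. x i)) m d"
    using insert by (intro phi_add) (auto intro!: Pk_sum)
  then show ?case using insert by simp
qed (auto simp: phi_zero)

lemma phi_const: "f \<in> Pk k \<Longrightarrow> m < n \<Longrightarrow> ev (\<phi> (const c * f)) m d = c * ev (\<phi> f) m d"
  using phi_lin[OF const_FL] by (simp add: ev_const_mult)

end

lemma canon_C:
  assumes g: "g \<in> canon_hat k n v L"
  shows "g \<in> Pk k \<and> Ccond g"
proof -
  from g obtain \<phi> where gPk: "g \<in> Pk k" and hom: "is_FL_hom k n v L \<phi>"
    and gI: "g - (\<Sum>i<n. \<phi> (sep i) * sep i) \<in> I"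
    by (auto simp: canon_hat_def)
  have "\<forall>i. \<exists>\<alpha>. \<forall>m<n. \<forall>d. ev (\<phi> (sep i)) m d = \<alpha> d"
    using FL_ev phi_FL[OF hom sep_Pk] by blast
  then obtain \<gamma> where \<gamma>: "\<And>i m d. m < n \<Longrightarrow> ev (\<phi> (sep i)) m d = \<gamma> i d"
    by metis
  have evg: "ev g m d = (if r \<le> d then \<gamma> m (d - r) else 0)" if "m < n" for m d
    using I_ev[OF gI that] ev_sum_sep[OF that] \<gamma>[OF that] by simp
  have "Ccond g"
    unfolding Ccond_def
  proof (intro allI impI ballI)
    fix d and h :: "'a mpoly" assume d: "d < 2 * r" and h: "h \<in> Pd k (2 * r - 1 - d)"
    show "(\<Sum>i<n. ev g i d * eval (v i) h) = 0"
    proof (cases "r \<le> d")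
      case False
      then show ?thesis by (simp add: evg)
    next
      case True
      define e where "e = 2 * r - 1 - d"
      define j where "j = d - r"
      have ej: "j + e = r - 1" "e < r" using True d r_pos by (auto simp: e_def j_def)
      have hPk: "h \<in> Pk k" and hh: "homog e h" using h by (auto simp: Pd_iff e_def)
      define u where "u = L ^ (r - e) * h"
      define w where "w = (\<Sum>m<n. const (eval (v m) h) * sep m)"
      have uPk: "u \<in> Pk k" unfolding u_def by (intro Pk_mult Pk_power L_Pk hPk)
      have wPk: "w \<in> Pk k" unfolding w_def by (intro Pk_sum Pk_mult Pk_const sep_Pk)
      have "u - w \<in> I"
      proof (rule eq_mod_I[OF uPk wPk])
        fix m d' assume m: "m < n"
        have "ev u m d' = (if d' = r then eval (v m) h else 0)"
          unfolding u_def ev_Lpow_mult[OF m] ev_homog[OF hh] using ej by auto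
        moreover have "ev w m d' = (if d' = r then eval (v m) h else 0)"
          unfolding w_def ev_sum using m
          by (simp add: ev_const_mult ev_sep if_distrib sum.delta cong: if_cong)
        ultimately show "ev u m d' = ev w m d'" by simp
      qed
      have n0: "0 < n" using n2 by simp
      have "ev (\<phi> u) 0 j = ev (\<phi> w) 0 j"
        by (rule phi_wd[OF hom uPk wPk \<open>u - w \<in> I\<close> n0])
      also have "\<dots> = (\<Sum>m<n. ev (\<phi> (const (eval (v m) h) * sep m)) 0 j)"
        unfolding w_def by (rule phi_sum[OF hom _ n0]) (simp add: Pk_mult Pk_const sep_Pk)
      also have "\<dots> = (\<Sum>m<n. eval (v m) h * \<gamma> m j)"
        using phi_const[OF hom sep_Pk n0] \<gamma>[OF n0] by simp
      finally have 1: "ev (\<phi> u) 0 j = (\<Sum>m<n. eval (v m) h * \<gamma> m j)" .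
      have "ev (\<phi> u) 0 j = ev (L ^ (r - e) * \<phi> h) 0 j"
        unfolding u_def by (rule phi_lin[OF hom Lpow_FL hPk n0])
      also have "\<dots> = 0"
      proof -
        have "\<not> r - e \<le> j" using ej by arith
        then show ?thesis by (simp add: ev_Lpow_mult[OF n0])
      qed
      finally have "(\<Sum>m<n. eval (v m) h * \<gamma> m j) = 0" using 1 by simp
      moreover have "(\<Sum>i<n. ev g i d * eval (v i) h) = (\<Sum>m<n. eval (v m) h * \<gamma> m j)"
        by (intro sum.cong refl) (simp add: evg True j_def)
      ultimately show ?thesis by simp
    qed
  qed
  then show ?thesis using gPk by simp
qed

end


context pts begin

definition Afun :: "'a mpoly \<Rightarrow> nat \<Rightarrow> 'a mpoly \<Rightarrow> nat \<Rightarrow> 'a" where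
  "Afun g D f j = (\<Sum>m<n. eval (v m) g * (if D \<le> j + 2 * r then ev f m (j + 2 * r - D) else 0))"

definition phifun :: "'a mpoly \<Rightarrow> nat \<Rightarrow> 'a mpoly \<Rightarrow> 'a mpoly" where
  "phifun g D f = (\<Sum>j\<le>mx f + D. const (Afun g D f j) * L ^ j)"

context
  fixes g :: "'a mpoly" and D :: nat
  assumes gPd: "g \<in> Pd k D" and gC: "Ccond g"
begin

lemma g_Pk: "g \<in> Pk k" and g_homog: "homog D g"
  using gPd by (auto simp: Pd_iff)

lemma evg: "ev g m d = (if d = D then eval (v m) g else 0)"
  by (rule ev_homog[OF g_homog])

lemma gZ: "D < r \<Longrightarrow> m0 < n \<Longrightarrow> eval (v m0) g = 0"
proof -
  assume D: "D < r" and m0: "m0 < n"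
  have "surjd (2 * r - 1 - D)" by (rule surj_ge) (use D in arith)
  then have "\<exists>h\<in>Pd k (2 * r - 1 - D). \<forall>m<n. eval (v m) h = (if m = m0 then 1 else 0)"
    unfolding surjd_def by (rule spec)
  then obtain h where h: "h \<in> Pd k (2 * r - 1 - D)" "\<forall>m<n. eval (v m) h = (if m = m0 then 1 else 0)"
    by blast
  have "(\<Sum>i<n. ev g i D * eval (v i) h) = 0"
    using gC h(1) D unfolding Ccond_def by auto
  moreover have "(\<Sum>i<n. ev g i D * eval (v i) h) = (\<Sum>i<n. if i = m0 then eval (v m0) g else 0)"
    by (intro sum.cong refl) (simp add: evg h(2))
  ultimately show ?thesis using m0 by simp
qed

lemma gNP: "f \<in> Pk k \<Longrightarrow> d' + D < 2 * r \<Longrightarrow> (\<Sum>m<n. eval (v m) g * ev f m d') = 0"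
proof -
  assume f: "f \<in> Pk k" and dd: "d' + D < 2 * r"
  define h where "h = L ^ (2 * r - 1 - D - d') * hcomp d' f"
  have "homog ((2 * r - 1 - D - d') * 1 + d') h"
    unfolding h_def by (intro homog_mult homog_power L_homog homog_hcomp)
  moreover have "(2 * r - 1 - D - d') * 1 + d' = 2 * r - 1 - D" using dd by arith
  ultimately have "h \<in> Pd k (2 * r - 1 - D)"
    using f by (auto simp: Pd_iff h_def intro!: Pk_mult Pk_power L_Pk Pk_hcomp)
  then have "(\<Sum>i<n. ev g i D * eval (v i) h) = 0"
    using gC dd unfolding Ccond_def by auto
  moreover have "(\<Sum>i<n. ev g i D * eval (v i) h) = (\<Sum>m<n. eval (v m) g * ev f m d')"
    by (intro sum.cong refl) (simp add: evg h_def eval_mult eval_Lpow, simp add: ev_def)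
  ultimately show ?thesis by simp
qed

lemma A_big: "mx f + D < j \<Longrightarrow> Afun g D f j = 0"
  unfolding Afun_def by (intro sum.neutral ballI) (auto simp: ev_big)

lemma ev_phi: "m < n \<Longrightarrow> ev (phifun g D f) m d = Afun g D f d"
  unfolding phifun_def by (simp add: ev_Lsum A_big)

lemma phi_Pk: "phifun g D f \<in> Pk k"
  unfolding phifun_def by (rule Lsum_Pk)

lemma A_add: "Afun g D (f + f') d = Afun g D f d + Afun g D f' d"
  unfolding Afun_def sum.distrib[symmetric] by (intro sum.cong refl) (auto simp: ev_add distrib_left)

lemma A_wd: "f - f' \<in> I \<Longrightarrow> Afun g D f d = Afun g D f' d"
  unfolding Afun_def by (intro sum.cong refl) (simp add: I_ev)

lemma A_lin:
  assumes f: "f \<in> Pk k" and \<alpha>: "\<And>m d. m < n \<Longrightarrow> ev a m d = \<alpha> d"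
  shows "Afun g D (a * f) d = (\<Sum>d1\<le>d. \<alpha> d1 * Afun g D f (d - d1))"
proof (cases "D \<le> d + 2 * r")
  case True
  define t where "t = d + 2 * r - D"
  define Q where "Q d1 = (\<Sum>m<n. eval (v m) g * ev f m (t - d1))" for d1
  have "Afun g D (a * f) d = (\<Sum>m<n. eval (v m) g * ev (a * f) m t)"
    unfolding Afun_def t_def using True by simp
  also have "\<dots> = (\<Sum>m<n. \<Sum>d1\<le>t. \<alpha> d1 * (eval (v m) g * ev f m (t - d1)))"
    by (intro sum.cong refl) (simp add: ev_mult \<alpha> sum_distrib_left mult_ac)
  also have "\<dots> = (\<Sum>d1\<le>t. \<alpha> d1 * Q d1)"
    unfolding Q_def by (subst sum.swap) (simp add: sum_distrib_left)
  also have "\<dots> = (\<Sum>d1\<le>t. if d1 \<in> {..d} then \<alpha> d1 * Q d1 else 0)"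
  proof (intro sum.cong refl)
    fix d1 assume d1: "d1 \<in> {..t}"
    show "\<alpha> d1 * Q d1 = (if d1 \<in> {..d} then \<alpha> d1 * Q d1 else 0)"
    proof (cases "d1 \<le> d")
      case False
      have "Q d1 = 0" unfolding Q_def
        by (rule gNP[OF f]) (use d1 False True in \<open>auto simp: t_def\<close>)
      then show ?thesis by simp
    qed simp
  qed
  also have "\<dots> = (\<Sum>d1\<in>{..t} \<inter> {..d}. \<alpha> d1 * Q d1)"
    by (rule sum.inter_restrict[symmetric]) simp
  finally have L: "Afun g D (a * f) d = (\<Sum>d1\<in>{..t} \<inter> {..d}. \<alpha> d1 * Q d1)" .
  have "(\<Sum>d1\<le>d. \<alpha> d1 * Afun g D f (d - d1)) = (\<Sum>d1\<le>d. if d1 \<in> {..t} then \<alpha> d1 * Q d1 else 0)"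
  proof (intro sum.cong refl)
    fix d1 assume d1: "d1 \<in> {..d}"
    have "Afun g D f (d - d1) = (if d1 \<le> t then Q d1 else 0)"
    proof (cases "d1 \<le> t")
      case True
      then have "D \<le> d - d1 + 2 * r" "d - d1 + 2 * r - D = t - d1" using d1 \<open>D \<le> d + 2 * r\<close>
        by (auto simp: t_def)
      then show ?thesis using True unfolding Afun_def Q_def by simp
    next
      case False
      then have "\<not> D \<le> d - d1 + 2 * r" using d1 by (auto simp: t_def)
      then show ?thesis using False unfolding Afun_def by simp
    qed
    then show "\<alpha> d1 * Afun g D f (d - d1) = (if d1 \<in> {..t} then \<alpha> d1 * Q d1 else 0)" by simp
  qed
  also have "\<dots> = (\<Sum>d1\<in>{..d} \<inter> {..t}. \<alpha> d1 * Q d1)"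
    by (rule sum.inter_restrict[symmetric]) simp
  finally show ?thesis using L by (simp only: Int_commute)
next
  case False
  have "Afun g D (a * f) d = 0" unfolding Afun_def using False by simp
  moreover have "Afun g D f (d - d1) = 0" if "d1 \<le> d" for d1
  proof -
    have "\<not> D \<le> d - d1 + 2 * r" using False that by arith
    then show ?thesis unfolding Afun_def by simp
  qed
  ultimately show ?thesis by simp
qed

lemma phi_hom: "is_FL_hom k n v L (phifun g D)"
  unfolding is_FL_hom_def
proof (intro conjI ballI impI)
  fix f :: "'a mpoly" assume f: "f \<in> Pk k"
  show "phifun g D f \<in> FLs"
    unfolding FL_def using phi_Pk zero_I
    by (auto intro!: exI[of _ "mx f + D"] exI[of _ "Afun g D f"] simp: phifun_def)
next
  fix f f' :: "'a mpoly" assume f: "f \<in> Pk k" and f': "f' \<in> Pk k" and ff: "f - f' \<in> I"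
  show "phifun g D f - phifun g D f' \<in> I"
    by (intro eq_mod_I phi_Pk) (simp add: ev_phi A_wd[OF ff])
next
  fix f f' :: "'a mpoly" assume f: "f \<in> Pk k" and f': "f' \<in> Pk k"
  show "phifun g D (f + f') - (phifun g D f + phifun g D f') \<in> I"
    by (intro eq_mod_I phi_Pk Pk_add) (simp add: ev_phi ev_add A_add)
next
  fix a f :: "'a mpoly" assume a: "a \<in> FLs" and f: "f \<in> Pk k"
  obtain \<alpha> where \<alpha>: "\<And>m d. m < n \<Longrightarrow> ev a m d = \<alpha> d" using FL_ev[OF a] by blast
  show "phifun g D (a * f) - a * phifun g D f \<in> I"
  proof (intro eq_mod_I phi_Pk Pk_mult FL_Pk[OF a])
    fix m d assume m: "m < n"
    show "ev (phifun g D (a * f)) m d = ev (a * phifun g D f) m d"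
      using m by (simp add: ev_phi A_lin[OF f \<alpha>] ev_mult \<alpha>)
  qed
qed

lemma C_canon: "g \<in> canon_hat k n v L"
  unfolding canon_hat_def
proof (intro CollectI conjI exI[of _ "phifun g D"] phi_hom g_Pk)
  show "g - (\<Sum>i<n. phifun g D (sep i) * sep i) \<in> I"
  proof (rule eq_mod_I[OF g_Pk])
    show "(\<Sum>i<n. phifun g D (sep i) * sep i) \<in> Pk k"
      by (intro Pk_sum Pk_mult phi_Pk sep_Pk)
  next
    fix m d assume m: "m < n"
    have As: "Afun g D (sep m) j = (if j + r = D then eval (v m) g else 0)" for j
    proof -
      have "Afun g D (sep m) j = (\<Sum>m'<n. if m' = m then (if D \<le> j + 2 * r \<and> j + 2 * r - D = r then eval (v m) g else 0) else 0)"
        unfolding Afun_def by (intro sum.cong refl) (auto simp: ev_sep)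
      also have "\<dots> = (if j + r = D then eval (v m) g else 0)"
        using m by auto
      finally show ?thesis .
    qed
    have "ev (\<Sum>i<n. phifun g D (sep i) * sep i) m d = (if r \<le> d \<and> d = D then eval (v m) g else 0)"
      using m by (auto simp: ev_sum_sep ev_phi As)
    moreover have "ev g m d = (if d = D then eval (v m) g else 0)" by (rule evg)
    ultimately show "ev g m d = ev (\<Sum>i<n. phifun g D (sep i) * sep i) m d"
      using gZ[OF _ m] by auto
  qed
qed

end

end


definition pair :: "'a::comm_semiring_1 mpoly \<Rightarrow> ((nat \<Rightarrow>\<^sub>0 nat) \<Rightarrow> 'a) \<Rightarrow> 'a" where
  "pair g \<psi> = (\<Sum>\<alpha>\<in>Poly_Mapping.keys g. Poly_Mapping.lookup g \<alpha> * \<psi> \<alpha>)"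

lemma pair_superset: "finite S \<Longrightarrow> Poly_Mapping.keys g \<subseteq> S \<Longrightarrow> pair g \<psi> = (\<Sum>\<alpha>\<in>S. Poly_Mapping.lookup g \<alpha> * \<psi> \<alpha>)"
  unfolding pair_def by (rule sum.mono_neutral_left) (auto simp: in_keys_iff)

lemma pair_add: "pair (f + g) \<psi> = pair f \<psi> + pair g \<psi>"
proof -
  let ?S = "Poly_Mapping.keys f \<union> Poly_Mapping.keys g"
  have "pair (f + g) \<psi> = (\<Sum>\<alpha>\<in>?S. Poly_Mapping.lookup (f + g) \<alpha> * \<psi> \<alpha>)"
    by (rule pair_superset) (auto simp: in_keys_iff lookup_add)
  also have "\<dots> = (\<Sum>\<alpha>\<in>?S. Poly_Mapping.lookup f \<alpha> * \<psi> \<alpha>) + (\<Sum>\<alpha>\<in>?S. Poly_Mapping.lookup g \<alpha> * \<psi> \<alpha>)"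
    by (simp add: lookup_add distrib_right sum.distrib)
  also have "\<dots> = pair f \<psi> + pair g \<psi>"
    by (simp add: pair_superset[symmetric])
  finally show ?thesis .
qed

lemma pair_zero [simp]: "pair 0 \<psi> = 0"
  by (simp add: pair_def)

lemma pair_sum: "pair (\<Sum>i\<in>A. f i) \<psi> = (\<Sum>i\<in>A. pair (f i) \<psi>)"
  by (induction A rule: infinite_finite_induct) (auto simp: pair_add)

lemma pair_single [simp]: "pair (Poly_Mapping.single \<alpha> c) \<psi> = c * \<psi> \<alpha>"
  by (simp add: pair_def)

lemma pair_mult_single: "contract g \<psi> \<gamma> = pair (g * Poly_Mapping.single \<gamma> 1) \<psi>"
proof -
  have "g * Poly_Mapping.single \<gamma> 1 = (\<Sum>\<alpha>\<in>Poly_Mapping.keys g. Poly_Mapping.single (\<alpha> + \<gamma>) (Poly_Mapping.lookup g \<alpha>))"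
    by (subst mult_expand) simp
  then show ?thesis by (simp add: pair_sum contract_def)
qed

lemma pair_contract: "pair g (contract f \<psi>) = pair (g * f) \<psi>"
proof -
  have "pair (g * f) \<psi> = (\<Sum>\<beta>\<in>Poly_Mapping.keys g. \<Sum>\<alpha>\<in>Poly_Mapping.keys f.
           Poly_Mapping.lookup g \<beta> * (Poly_Mapping.lookup f \<alpha> * \<psi> (\<alpha> + \<beta>)))"
    by (subst mult_expand) (simp add: pair_sum add.commute mult_ac)
  then show ?thesis by (simp add: pair_def contract_def sum_distrib_left)
qed

lemma contract_superset: "finite S \<Longrightarrow> Poly_Mapping.keys g \<subseteq> S \<Longrightarrow>
    contract g \<psi> \<gamma> = (\<Sum>\<alpha>\<in>S. Poly_Mapping.lookup g \<alpha> * \<psi> (\<alpha> + \<gamma>))"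
  unfolding contract_def by (rule sum.mono_neutral_left) (auto simp: in_keys_iff)

lemma finite_mons: "finite {\<beta> :: nat \<Rightarrow>\<^sub>0 nat. Poly_Mapping.keys \<beta> \<subseteq> {..<k} \<and> mdeg \<beta> \<le> B}"
proof -
  define S where "S = {\<beta> :: nat \<Rightarrow>\<^sub>0 nat. Poly_Mapping.keys \<beta> \<subseteq> {..<k} \<and> mdeg \<beta> \<le> B}"
  define F where "F = {h. \<forall>x. (x \<in> {..<k} \<longrightarrow> h x \<in> {..B}) \<and> (x \<notin> {..<k} \<longrightarrow> h x = (0::nat))}"
  have fF: "finite F" unfolding F_def by (rule finite_set_of_finite_funs) auto
  have sub: "Poly_Mapping.lookup ` S \<subseteq> F"
  proof (rule image_subsetI)
    fix \<beta> assume b: "\<beta> \<in> S"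
    have "Poly_Mapping.lookup \<beta> x \<in> {..B}" for x
      using lookup_le_mdeg[of \<beta> x] b by (simp add: S_def)
    moreover have "Poly_Mapping.lookup \<beta> x = 0" if "x \<notin> {..<k}" for x
      using b that by (auto simp: S_def in_keys_iff)
    ultimately show "Poly_Mapping.lookup \<beta> \<in> F" unfolding F_def by blast
  qed
  have "finite (Poly_Mapping.lookup ` S)" by (rule finite_subset[OF sub fF])
  moreover have "inj_on Poly_Mapping.lookup S"
    by (rule inj_onI) simp
  ultimately show ?thesis unfolding S_def[symmetric] by (rule finite_imageD)
qed

lemma finite_mons_eq: "finite {\<beta> :: nat \<Rightarrow>\<^sub>0 nat. Poly_Mapping.keys \<beta> \<subseteq> {..<k} \<and> mdeg \<beta> = D}"
  by (rule finite_subset[OF _ finite_mons[of k D]]) (rule Collect_mono, simp)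

lemma eval_hcomp_sum: "eval w (hcomp d f) = (\<Sum>\<alpha>\<in>Poly_Mapping.keys f. if mdeg \<alpha> = d then Poly_Mapping.lookup f \<alpha> * monom_eval w \<alpha> else 0)"
  by (simp add: hcomp_expand eval_sum if_distrib cong: if_cong)

context pts begin

lemma PhiX_val: "PhiX k n v \<beta> = (if Poly_Mapping.keys \<beta> \<subseteq> {..<k} \<and> mdeg \<beta> = 2 * r - 1
    then (\<Sum>i<n. monom_eval (v i) \<beta>) else 0)"
  unfolding PhiX_def by (auto simp: mev_superset[of "{..<k}"])

lemma pair_Phi: "f \<in> Pk k \<Longrightarrow> pair f (PhiX k n v) = (\<Sum>i<n. ev f i (2 * r - 1))"
proof -
  assume f: "f \<in> Pk k"
  have "pair f (PhiX k n v) = (\<Sum>\<alpha>\<in>Poly_Mapping.keys f. \<Sum>i<n.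
      if mdeg \<alpha> = 2 * r - 1 then Poly_Mapping.lookup f \<alpha> * monom_eval (v i) \<alpha> else 0)"
    unfolding pair_def
  proof (intro sum.cong refl)
    fix \<alpha> assume "\<alpha> \<in> Poly_Mapping.keys f"
    then have "Poly_Mapping.keys \<alpha> \<subseteq> {..<k}" using f by (auto simp: Pk_def)
    then show "Poly_Mapping.lookup f \<alpha> * PhiX k n v \<alpha> = (\<Sum>i<n.
      if mdeg \<alpha> = 2 * r - 1 then Poly_Mapping.lookup f \<alpha> * monom_eval (v i) \<alpha> else 0)"
      by (simp add: PhiX_val sum_distrib_left)
  qed
  also have "\<dots> = (\<Sum>i<n. ev f i (2 * r - 1))"
    by (subst sum.swap) (simp add: ev_def eval_hcomp_sum)
  finally show ?thesis .
qed

end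


context pts begin

lemma ev_mult_mon: "ev (f * Poly_Mapping.single \<gamma> (1::'a)) i N =
    (if mdeg \<gamma> \<le> N then ev f i (N - mdeg \<gamma>) * monom_eval (v i) \<gamma> else 0)"
proof -
  have "ev (f * Poly_Mapping.single \<gamma> (1::'a)) i N =
      (\<Sum>d1\<le>N. ev f i d1 * (if mdeg \<gamma> = N - d1 then monom_eval (v i) \<gamma> else 0))"
    by (simp add: ev_mult ev_single cong: if_cong)
  also have "\<dots> = (\<Sum>d1\<le>N. if d1 = N - mdeg \<gamma> then
      (if mdeg \<gamma> \<le> N then ev f i d1 * monom_eval (v i) \<gamma> else 0) else 0)"
    by (intro sum.cong refl) auto
  also have "\<dots> = (if mdeg \<gamma> \<le> N then ev f i (N - mdeg \<gamma>) * monom_eval (v i) \<gamma> else 0)"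
    by (simp add: sum.delta')
  finally show ?thesis .
qed

lemma single_Pk: "Poly_Mapping.keys \<gamma> \<subseteq> {..<k} \<Longrightarrow> Poly_Mapping.single \<gamma> (1::'a) \<in> Pk k"
  by (rule Pk_single)

lemma contract_Phi: "f \<in> Pk k \<Longrightarrow> Poly_Mapping.keys \<gamma> \<subseteq> {..<k} \<Longrightarrow>
    contract f (PhiX k n v) \<gamma> = (if mdeg \<gamma> \<le> 2 * r - 1 then
       (\<Sum>i<n. ev f i (2 * r - 1 - mdeg \<gamma>) * monom_eval (v i) \<gamma>) else 0)"
  by (simp add: pair_mult_single pair_Phi Pk_mult single_Pk ev_mult_mon)

lemma Dmod_contract: "f \<in> Pk k \<Longrightarrow> contract f (PhiX k n v) \<in> Dmod k"
proof -
  assume f: "f \<in> Pk k"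
  have supp: "Poly_Mapping.keys \<gamma> \<subseteq> {..<k} \<and> mdeg \<gamma> \<le> 2 * r - 1"
    if nz: "contract f (PhiX k n v) \<gamma> \<noteq> 0" for \<gamma>
  proof -
    obtain \<alpha> where "\<alpha> \<in> Poly_Mapping.keys f" "Poly_Mapping.lookup f \<alpha> * PhiX k n v (\<alpha> + \<gamma>) \<noteq> 0"
      using nz unfolding contract_def by (meson sum.not_neutral_contains_not_neutral)
    then have "PhiX k n v (\<alpha> + \<gamma>) \<noteq> 0" by auto
    then have "Poly_Mapping.keys (\<alpha> + \<gamma>) \<subseteq> {..<k}" "mdeg (\<alpha> + \<gamma>) = 2 * r - 1"
      by (auto simp: PhiX_val split: if_splits)
    then show ?thesis by (auto simp: keys_add_nat mdeg_add)
  qed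
  have "{\<gamma>. contract f (PhiX k n v) \<gamma> \<noteq> 0} \<subseteq> {\<gamma>. Poly_Mapping.keys \<gamma> \<subseteq> {..<k} \<and> mdeg \<gamma> \<le> 2 * r - 1}"
    using supp by blast
  then have "finite {\<gamma>. contract f (PhiX k n v) \<gamma> \<noteq> 0}"
    by (rule finite_subset) (rule finite_mons)
  then show ?thesis unfolding Dmod_def using supp by blast
qed

lemma Dmod_zero: "\<psi> \<in> Dmod k \<Longrightarrow> \<not> Poly_Mapping.keys \<gamma> \<subseteq> {..<k} \<Longrightarrow> \<psi> \<gamma> = 0"
  by (auto simp: Dmod_def)

lemma canon_Ccond: "g \<in> canon_hat k n v L \<Longrightarrow> Ccond g"
  using canon_C by blast

lemma canon_Pk: "g \<in> canon_hat k n v L \<Longrightarrow> g \<in> Pk k"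
  using canon_C by blast

lemma perp_sup: "f \<in> Pk k \<Longrightarrow> contract f (PhiX k n v) \<in> perp k (canon_hat k n v L)"
proof -
  assume f: "f \<in> Pk k"
  let ?\<psi> = "contract f (PhiX k n v)"
  have D: "?\<psi> \<in> Dmod k" by (rule Dmod_contract[OF f])
  have "contract g ?\<psi> = (\<lambda>_. 0)" if g: "g \<in> canon_hat k n v L" for g
  proof
    fix \<gamma>
    show "contract g ?\<psi> \<gamma> = 0"
    proof (cases "Poly_Mapping.keys \<gamma> \<subseteq> {..<k}")
      case False
      have "?\<psi> (\<alpha> + \<gamma>) = 0" for \<alpha>
        by (rule Dmod_zero[OF D]) (use False in \<open>auto simp: keys_add_nat\<close>)
      then show ?thesis by (simp add: contract_def)
    next
      case True
      define q where "q = Poly_Mapping.single \<gamma> (1::'a) * f"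
      have gPk: "g \<in> Pk k" by (rule canon_Pk[OF g])
      have qPk: "q \<in> Pk k" unfolding q_def using True f by (intro Pk_mult single_Pk)
      have "contract g ?\<psi> \<gamma> = pair (g * q) (PhiX k n v)"
        by (simp add: pair_mult_single pair_contract q_def mult.assoc)
      also have "\<dots> = (\<Sum>i<n. ev (g * q) i (2 * r - 1))"
        by (rule pair_Phi) (intro Pk_mult gPk qPk)
      also have "\<dots> = (\<Sum>d1\<le>2 * r - 1. \<Sum>i<n. ev g i d1 * eval (v i) (hcomp (2 * r - 1 - d1) q))"
        by (simp add: ev_mult ev_def[of q]) (rule sum.swap)
      also have "\<dots> = 0"
      proof (rule sum.neutral, rule ballI)
        fix d1 assume d1: "d1 \<in> {..2 * r - 1}"
        have "d1 < 2 * r" using d1 r_pos by auto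
        then show "(\<Sum>i<n. ev g i d1 * eval (v i) (hcomp (2 * r - 1 - d1) q)) = 0"
          using canon_Ccond[OF g] hcomp_Pd[OF qPk] unfolding Ccond_def by blast
      qed
      finally show ?thesis .
    qed
  qed
  then show ?thesis using D by (simp add: perp_def)
qed

end


context pts begin

lemma part_a: "{g \<in> canon_hat k n v L. homog (2 * r - 1) g}
           = {g \<in> Pd k (2 * r - 1). (\<Sum>i<n. eval (v i) g) = 0}"
proof (intro equalityI subsetI)
  fix g assume "g \<in> {g \<in> canon_hat k n v L. homog (2 * r - 1) g}"
  then have g: "g \<in> canon_hat k n v L" and hg: "homog (2 * r - 1) g" by auto
  have gPd: "g \<in> Pd k (2 * r - 1)" using canon_Pk[OF g] hg by (simp add: Pd_iff)
  have c1: "const 1 \<in> Pd k (2 * r - 1 - (2 * r - 1))"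
    by (simp add: Pd_iff Pk_const homog_const)
  have lt: "2 * r - 1 < 2 * r" using r_pos by simp
  have "(\<Sum>i<n. ev g i (2 * r - 1) * eval (v i) (const 1)) = 0"
    using canon_Ccond[OF g] c1 lt unfolding Ccond_def by blast
  then have "(\<Sum>i<n. eval (v i) g) = 0" by (simp add: ev_homog[OF hg])
  then show "g \<in> {g \<in> Pd k (2 * r - 1). (\<Sum>i<n. eval (v i) g) = 0}" using gPd by simp
next
  fix g assume "g \<in> {g \<in> Pd k (2 * r - 1). (\<Sum>i<n. eval (v i) g) = 0}"
  then have gPd: "g \<in> Pd k (2 * r - 1)" and s: "(\<Sum>i<n. eval (v i) g) = 0" by auto
  have hg: "homog (2 * r - 1) g" using gPd by (simp add: Pd_iff)
  have "Ccond g" unfolding Ccond_def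
  proof (intro allI impI ballI)
    fix d and h :: "'a mpoly" assume d: "d < 2 * r" and h: "h \<in> Pd k (2 * r - 1 - d)"
    show "(\<Sum>i<n. ev g i d * eval (v i) h) = 0"
    proof (cases "d = 2 * r - 1")
      case True
      then have "homog 0 h" using h by (simp add: Pd_iff)
      then have "(\<Sum>i<n. ev g i d * eval (v i) h) = (\<Sum>i<n. eval (v i) g) * Poly_Mapping.lookup h 0"
        using True by (simp add: ev_homog[OF hg] eval_homog0 sum_distrib_right)
      then show ?thesis using s by simp
    next
      case False
      then show ?thesis by (simp add: ev_homog[OF hg])
    qed
  qed
  then have "g \<in> canon_hat k n v L" by (rule C_canon[OF gPd])
  then show "g \<in> {g \<in> canon_hat k n v L. homog (2 * r - 1) g}" using hg by simp
qed

lemma part_b1: "PhiX k n v \<noteq> (\<lambda>_. 0)"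
proof
  assume Z: "PhiX k n v = (\<lambda>_. 0)"
  define s where "s = sep 0 * L ^ (r - 1)"
  have "homog (r + (r - 1) * 1) s" unfolding s_def
    using sep[of 0] by (intro homog_mult homog_power L_homog) (simp add: Pd_iff)
  moreover have "r + (r - 1) * 1 = 2 * r - 1" using r_pos by simp
  ultimately have hs: "homog (2 * r - 1) s" by simp
  have sPk: "s \<in> Pk k" unfolding s_def by (intro Pk_mult Pk_power L_Pk sep_Pk)
  have "pair s (PhiX k n v) = (\<Sum>i<n. ev s i (2 * r - 1))" by (rule pair_Phi[OF sPk])
  also have "\<dots> = (\<Sum>i<n. if i = 0 then 1 else 0)"
  proof (intro sum.cong refl)
    fix i assume "i \<in> {..<n}"
    then have "eval (v i) s = (if i = 0 then 1 else 0)"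
      using sep[of 0] by (simp add: s_def eval_mult eval_Lpow)
    then show "ev s i (2 * r - 1) = (if i = 0 then 1 else 0)" by (simp add: ev_homog[OF hs])
  qed
  also have "\<dots> = 1" using n2 by simp
  finally have "pair s (PhiX k n v) = 1" .
  moreover have "pair s (PhiX k n v) = 0" by (simp add: Z pair_def)
  ultimately show False by simp
qed

end


context pts begin

abbreviation "mons D \<equiv> {\<beta> :: nat \<Rightarrow>\<^sub>0 nat. Poly_Mapping.keys \<beta> \<subseteq> {..<k} \<and> mdeg \<beta> = D}"

lemma perp_fD:
  assumes P: "\<psi> \<in> perp k (canon_hat k n v L)" and D: "D \<le> 2 * r - 1"
  shows "\<exists>F\<in>Pd k (2 * r - 1 - D). \<forall>\<beta>\<in>mons D. \<psi> \<beta> = (\<Sum>i<n. eval (v i) F * monom_eval (v i) \<beta>)"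
proof -
  define M where "M = mons D"
  define H where "H = mons (2 * r - 1 - D)"
  define B where "B \<beta> h = (\<Sum>i<n. monom_eval (v i) \<beta> * monom_eval (v i) h)" for \<beta> h
  have perpc: "contract g \<psi> = (\<lambda>_. 0)" if "g \<in> canon_hat k n v L" for g
    using P that by (auto simp: perp_def)
  have fM: "finite M" unfolding M_def by (rule finite_mons_eq)
  have fH: "finite H" unfolding H_def by (rule finite_mons_eq)
  have cond: "\<forall>a. (\<forall>h\<in>H. (\<Sum>\<beta>\<in>M. a \<beta> * B \<beta> h) = 0) \<longrightarrow> (\<Sum>\<beta>\<in>M. a \<beta> * \<psi> \<beta>) = 0"
  proof (intro allI impI)
    fix a assume a: "\<forall>h\<in>H. (\<Sum>\<beta>\<in>M. a \<beta> * B \<beta> h) = 0"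
    define p where "p = (\<Sum>\<beta>\<in>M. Poly_Mapping.single \<beta> (a \<beta>))"
    have pPd: "p \<in> Pd k D" unfolding p_def Pd_iff
      by (auto simp: M_def intro!: Pk_sum Pk_single homog_sum homog_single)
    have hp: "homog D p" using pPd by (simp add: Pd_iff)
    have evp: "eval (v i) p = (\<Sum>\<beta>\<in>M. a \<beta> * monom_eval (v i) \<beta>)" for i
      by (simp add: p_def eval_sum)
    have lp: "Poly_Mapping.lookup p \<beta> = a \<beta>" if "\<beta> \<in> M" for \<beta>
      using that fM by (simp add: p_def lookup_sum lookup_single when_def sum.delta)
    have kp: "Poly_Mapping.keys p \<subseteq> M"
    proof
      fix \<beta> assume "\<beta> \<in> Poly_Mapping.keys p"
      then have "Poly_Mapping.lookup p \<beta> \<noteq> 0" by (simp add: in_keys_iff)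
      then show "\<beta> \<in> M" unfolding p_def lookup_sum lookup_single
        by (metis (mono_tags, lifting) sum.neutral when_def)
    qed
    have "Ccond p" unfolding Ccond_def
    proof (intro allI impI ballI)
      fix d and h' :: "'a mpoly" assume d: "d < 2 * r" and h': "h' \<in> Pd k (2 * r - 1 - d)"
      show "(\<Sum>i<n. ev p i d * eval (v i) h') = 0"
      proof (cases "d = D")
        case False
        then show ?thesis by (simp add: ev_homog[OF hp])
      next
        case True
        have kh: "Poly_Mapping.keys h' \<subseteq> H"
          using h' True by (auto simp: H_def Pd_iff Pk_def homog_def)
        have evh: "eval (v i) h' = (\<Sum>h\<in>H. Poly_Mapping.lookup h' h * monom_eval (v i) h)" for i
          by (rule eval_superset[OF fH kh])
        have "(\<Sum>i<n. ev p i d * eval (v i) h') =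
            (\<Sum>i<n. \<Sum>\<beta>\<in>M. \<Sum>h\<in>H. a \<beta> * Poly_Mapping.lookup h' h * (monom_eval (v i) \<beta> * monom_eval (v i) h))"
          by (simp add: True ev_homog[OF hp] evp evh sum_product mult_ac)
        also have "\<dots> = (\<Sum>\<beta>\<in>M. \<Sum>i<n. \<Sum>h\<in>H. a \<beta> * Poly_Mapping.lookup h' h * (monom_eval (v i) \<beta> * monom_eval (v i) h))"
          by (rule sum.swap)
        also have "\<dots> = (\<Sum>\<beta>\<in>M. \<Sum>h\<in>H. \<Sum>i<n. a \<beta> * Poly_Mapping.lookup h' h * (monom_eval (v i) \<beta> * monom_eval (v i) h))"
          by (intro sum.cong refl) (rule sum.swap)
        also have "\<dots> = (\<Sum>h\<in>H. \<Sum>\<beta>\<in>M. \<Sum>i<n. a \<beta> * Poly_Mapping.lookup h' h * (monom_eval (v i) \<beta> * monom_eval (v i) h))"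
          by (rule sum.swap)
        also have "\<dots> = (\<Sum>h\<in>H. Poly_Mapping.lookup h' h * (\<Sum>\<beta>\<in>M. a \<beta> * B \<beta> h))"
          by (simp add: B_def sum_distrib_left mult_ac)
        also have "\<dots> = 0" using a by simp
        finally show ?thesis .
      qed
    qed
    then have "p \<in> canon_hat k n v L" by (rule C_canon[OF pPd])
    then have "contract p \<psi> 0 = 0" using perpc by simp
    moreover have "contract p \<psi> 0 = (\<Sum>\<beta>\<in>M. a \<beta> * \<psi> \<beta>)"
      by (simp add: contract_superset[OF fM kp] lp)
    ultimately show "(\<Sum>\<beta>\<in>M. a \<beta> * \<psi> \<beta>) = 0" by simp
  qed
  obtain b where b: "\<forall>\<beta>\<in>M. \<psi> \<beta> = (\<Sum>h\<in>H. b h * B \<beta> h)"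
    using fredholm[OF fH fM cond] by blast
  define F where "F = (\<Sum>h\<in>H. Poly_Mapping.single h (b h))"
  have FPd: "F \<in> Pd k (2 * r - 1 - D)" unfolding F_def Pd_iff
    by (auto simp: H_def intro!: Pk_sum Pk_single homog_sum homog_single)
  have "\<psi> \<beta> = (\<Sum>i<n. eval (v i) F * monom_eval (v i) \<beta>)" if \<beta>: "\<beta> \<in> M" for \<beta>
  proof -
    have "(\<Sum>i<n. eval (v i) F * monom_eval (v i) \<beta>) = (\<Sum>i<n. \<Sum>h\<in>H. b h * (monom_eval (v i) \<beta> * monom_eval (v i) h))"
      by (simp add: F_def eval_sum sum_distrib_right sum_distrib_left mult_ac)
    also have "\<dots> = (\<Sum>h\<in>H. b h * B \<beta> h)"
      by (subst sum.swap) (simp add: B_def sum_distrib_left)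
    finally show ?thesis using b \<beta> by simp
  qed
  then show ?thesis using FPd unfolding M_def by blast
qed

end


context pts begin

lemma perp_sub:
  assumes P: "\<psi> \<in> perp k (canon_hat k n v L)"
  shows "\<exists>f\<in>Pk k. \<psi> = contract f (PhiX k n v)"
proof -
  have Dm: "\<psi> \<in> Dmod k" using P by (simp add: perp_def)
  have perpc: "contract g \<psi> = (\<lambda>_. 0)" if "g \<in> canon_hat k n v L" for g
    using P that by (auto simp: perp_def)
  have zero_big: "\<psi> \<gamma> = 0" if kg: "Poly_Mapping.keys \<gamma> \<subseteq> {..<k}" and big: "2 * r - 1 < mdeg \<gamma>" for \<gamma>
  proof -
    define g where "g = Poly_Mapping.single \<gamma> (1::'a)"
    have hg: "homog (mdeg \<gamma>) g" unfolding g_def by (rule homog_single) simp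
    have gPd: "g \<in> Pd k (mdeg \<gamma>)" using hg kg by (simp add: Pd_iff g_def Pk_single)
    have "Ccond g" unfolding Ccond_def
    proof (intro allI impI ballI)
      fix d and h :: "'a mpoly" assume d: "d < 2 * r"
      then have "d \<noteq> mdeg \<gamma>" using big by arith
      then show "(\<Sum>i<n. ev g i d * eval (v i) h) = 0" by (simp add: ev_homog[OF hg])
    qed
    then have "g \<in> canon_hat k n v L" by (rule C_canon[OF gPd])
    then have "contract g \<psi> 0 = 0" using perpc by simp
    then show ?thesis by (simp add: contract_def g_def)
  qed
  define FF where "FF D = (SOME F. F \<in> Pd k (2 * r - 1 - D) \<and>
      (\<forall>\<beta>\<in>mons D. \<psi> \<beta> = (\<Sum>i<n. eval (v i) F * monom_eval (v i) \<beta>)))" for D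
  have FF: "FF D \<in> Pd k (2 * r - 1 - D) \<and>
      (\<forall>\<beta>\<in>mons D. \<psi> \<beta> = (\<Sum>i<n. eval (v i) (FF D) * monom_eval (v i) \<beta>))"
    if D: "D \<le> 2 * r - 1" for D
  proof -
    have "\<exists>F. F \<in> Pd k (2 * r - 1 - D) \<and>
      (\<forall>\<beta>\<in>mons D. \<psi> \<beta> = (\<Sum>i<n. eval (v i) F * monom_eval (v i) \<beta>))"
      using perp_fD[OF P D] by (elim bexE) (rule exI, rule conjI)
    then show ?thesis unfolding FF_def by (rule someI_ex)
  qed
  define f where "f = (\<Sum>D\<le>2 * r - 1. FF D)"
  have fPk: "f \<in> Pk k" unfolding f_def using FF by (intro Pk_sum) (auto simp: Pd_iff)
  have evf: "ev f i (2 * r - 1 - D) = eval (v i) (FF D)" if D: "D \<le> 2 * r - 1" for i D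
  proof -
    have "ev f i (2 * r - 1 - D) = (\<Sum>D'\<le>2 * r - 1. ev (FF D') i (2 * r - 1 - D))"
      by (simp add: f_def ev_sum)
    also have "\<dots> = (\<Sum>D'\<le>2 * r - 1. if D' = D then eval (v i) (FF D') else 0)"
    proof (intro sum.cong refl)
      fix D' assume D': "D' \<in> {..2 * r - 1}"
      have h: "homog (2 * r - 1 - D') (FF D')" using FF[of D'] D' by (simp add: Pd_iff)
      have "(2 * r - 1 - D = 2 * r - 1 - D') \<longleftrightarrow> D' = D" using D D' by auto
      then show "ev (FF D') i (2 * r - 1 - D) = (if D' = D then eval (v i) (FF D') else 0)"
        by (simp add: ev_homog[OF h])
    qed
    also have "\<dots> = eval (v i) (FF D)" using D by (simp add: sum.delta')
    finally show ?thesis .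
  qed
  have "\<psi> = contract f (PhiX k n v)"
  proof
    fix \<gamma>
    show "\<psi> \<gamma> = contract f (PhiX k n v) \<gamma>"
    proof (cases "Poly_Mapping.keys \<gamma> \<subseteq> {..<k}")
      case False
      then show ?thesis using Dmod_zero[OF Dm] Dmod_zero[OF Dmod_contract[OF fPk]] by simp
    next
      case True
      show ?thesis
      proof (cases "mdeg \<gamma> \<le> 2 * r - 1")
        case small: True
        have "contract f (PhiX k n v) \<gamma> = (\<Sum>i<n. ev f i (2 * r - 1 - mdeg \<gamma>) * monom_eval (v i) \<gamma>)"
          using contract_Phi[OF fPk True] small by simp
        also have "\<dots> = (\<Sum>i<n. eval (v i) (FF (mdeg \<gamma>)) * monom_eval (v i) \<gamma>)"
          by (intro sum.cong refl) (simp only: evf[OF small])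
        finally have "contract f (PhiX k n v) \<gamma> = (\<Sum>i<n. eval (v i) (FF (mdeg \<gamma>)) * monom_eval (v i) \<gamma>)" .
        also have "\<dots> = \<psi> \<gamma>" using FF[OF small] True by simp
        finally show ?thesis by simp
      next
        case False
        then show ?thesis using zero_big[OF True] by (simp add: contract_Phi[OF fPk True])
      qed
    qed
  qed
  then show ?thesis using fPk by blast
qed

end

theorem theorem7p5:
  fixes k n :: nat
    and v :: "nat \<Rightarrow> nat \<Rightarrow> 'a::{field,finite}"
    and L :: "'a mpoly"
  assumes "n \<ge> 2"
    and "\<forall>i<n. \<forall>j<n. i \<noteq> j \<longrightarrow> (\<exists>t<k. v i t \<noteq> v j t)"
    and "L \<in> Pd k 1"
    and "\<forall>i<n. eval (v i) L = 1"
  shows "({g \<in> canon_hat k n v L. homog (2 * reg_index k n v - 1) g}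
           = {g \<in> Pd k (2 * reg_index k n v - 1). (\<Sum>i<n. eval (v i) g) = 0})
         \<and> PhiX k n v \<noteq> (\<lambda>_. 0)
         \<and> perp k (canon_hat k n v L) = {contract f (PhiX k n v) | f. f \<in> Pk k}"
proof -
  interpret pts k n v L using assms by unfold_locales
  have "perp k (canon_hat k n v L) = {contract f (PhiX k n v) | f. f \<in> Pk k}"
  proof (intro equalityI subsetI)
    fix \<psi> assume "\<psi> \<in> perp k (canon_hat k n v L)"
    then obtain f where "f \<in> Pk k" "\<psi> = contract f (PhiX k n v)" using perp_sub by blast
    then show "\<psi> \<in> {contract f (PhiX k n v) | f. f \<in> Pk k}" by blast
  next
    fix \<psi> assume "\<psi> \<in> {contract f (PhiX k n v) | f. f \<in> Pk k}"
    then obtain f where "f \<in> Pk k" "\<psi> = contract f (PhiX k n v)" by blast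
    then show "\<psi> \<in> perp k (canon_hat k n v L)" using perp_sup by simp
  qed
  then show ?thesis using part_a part_b1 by simp
qed



end
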